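(* Let $\Lambda$ be the join of the complements of finitely many path graphs and let $\Gamma$ be a finite simple graph. Suppose that $\psi\colon A(\Lambda)\to A(\Gamma)$ is an injective homomorphism satisfying condition (KK). Then there is a full embedding $\iota\colon\Lambda\to\Gamma$ with $\iota(V(\Lambda))\subset\mathrm{supp}(\psi)$.
   Context: $A(\Gamma) = \langle V(\Gamma) \mid uv=vu \text{ whenever } \{u,v\}\in E(\Gamma)\rangle$ is the right-angled Artin group. The path graph $P_n$ ($n\ge1$) has vertices $x_1,\dots,x_n$ and edges $\{x_i,x_{i+1}\}$; the complement $\Lambda^c$ of a graph has the same vertices, two distinct vertices adjacent iff non-adjacent in $\Lambda$. The join $\Lambda_1*\cdots*\Lambda_m$ is obtained from the disjoint union by joining every vertex of $\Lambda_i$ to every vertex of $\Lambda_j$ for $i\ne j$. A graph embedding is an injective vertex map preserving adjacency; it is full if it also preserves non-adjacency. The support $\mathrm{supp}(g)$ of $g\in A(\Gamma)$ is the set of vertices $v$ such that $v$ or $v^{-1}$ occurs in a (equivalently, any) shortest word representing $g$; for a homomorphism $\psi\colon A(\Lambda)\to A(\Gamma)$, $\mathrm{supp}(\psi)=\bigcup_{v\in V(\Lambda)}\mathrm{supp}(\psi(v))$. A homomorphism $\psi$ satisfies condition (KK) if for every $v\in V(\Lambda)$ the set $\mathrm{supp}(\psi(v))$ consists of mutually adjacent vertices of $\Gamma$. *)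

theory Defs
  imports Main
begin

definition finite_simple_graph :: "'v set \<Rightarrow> ('v \<Rightarrow> 'v \<Rightarrow> bool) \<Rightarrow> bool" where
  "finite_simple_graph V E \<longleftrightarrow> finite V \<and> (\<forall>u v. E u v \<longrightarrow> u \<in> V \<and> v \<in> V)
     \<and> (\<forall>u v. E u v \<longrightarrow> E v u) \<and> (\<forall>v. \<not> E v v)"

text \<open>Words in the generators and their inverses: a letter (v, False) is v,
(v, True) is v inverse.\<close>

type_synonym 'v word = "('v \<times> bool) list"

inductive raag_step :: "('v \<Rightarrow> 'v \<Rightarrow> bool) \<Rightarrow> 'v word \<Rightarrow> 'v word \<Rightarrow> bool"
  for E where
  cancel: "raag_step E (xs @ [(v, b), (v, \<not> b)] @ ys) (xs @ ys)"
| commute: "E u v \<Longrightarrow> raag_step E (xs @ [(u, a), (v, b)] @ ys) (xs @ [(v, b), (u, a)] @ ys)"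

definition raag_eq :: "('v \<Rightarrow> 'v \<Rightarrow> bool) \<Rightarrow> 'v word \<Rightarrow> 'v word \<Rightarrow> bool" where
  "raag_eq E = equivclp (raag_step E)"

definition word_over :: "'v set \<Rightarrow> 'v word \<Rightarrow> bool" where
  "word_over V w \<longleftrightarrow> fst ` set w \<subseteq> V"

definition inv_word :: "'v word \<Rightarrow> 'v word" where
  "inv_word w = rev (map (\<lambda>(v, b). (v, \<not> b)) w)"

text \<open>A homomorphism A(Lambda) -> A(Gamma) is given by choosing, for each generator,
a word representing its image; it extends to words as follows.\<close>
definition hom_ext :: "('a \<Rightarrow> 'b word) \<Rightarrow> 'a word \<Rightarrow> 'b word" where
  "hom_ext f w = concat (map (\<lambda>(v, b). if b then inv_word (f v) else f v) w)"

definition raag_hom :: "'a set \<Rightarrow> ('a \<Rightarrow> 'a \<Rightarrow> bool) \<Rightarrow> 'b set \<Rightarrow> ('b \<Rightarrow> 'b \<Rightarrow> bool)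
    \<Rightarrow> ('a \<Rightarrow> 'b word) \<Rightarrow> bool" where
  "raag_hom VL EL VG EG f \<longleftrightarrow> (\<forall>v\<in>VL. word_over VG (f v))
     \<and> (\<forall>u\<in>VL. \<forall>v\<in>VL. EL u v \<longrightarrow> raag_eq EG (f u @ f v) (f v @ f u))"

definition raag_hom_injective :: "'a set \<Rightarrow> ('a \<Rightarrow> 'a \<Rightarrow> bool) \<Rightarrow> ('b \<Rightarrow> 'b \<Rightarrow> bool)
    \<Rightarrow> ('a \<Rightarrow> 'b word) \<Rightarrow> bool" where
  "raag_hom_injective VL EL EG f \<longleftrightarrow>
     (\<forall>w1 w2. word_over VL w1 \<longrightarrow> word_over VL w2 \<longrightarrow>
        raag_eq EG (hom_ext f w1) (hom_ext f w2) \<longrightarrow> raag_eq EL w1 w2)"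

text \<open>Support of the element represented by w: vertices occurring in a shortest
representative word (equivalently in any shortest one).\<close>
definition geodesic_rep :: "('v \<Rightarrow> 'v \<Rightarrow> bool) \<Rightarrow> 'v word \<Rightarrow> 'v word \<Rightarrow> bool" where
  "geodesic_rep E w w' \<longleftrightarrow> raag_eq E w w' \<and> (\<forall>w''. raag_eq E w w'' \<longrightarrow> length w' \<le> length w'')"

definition raag_supp :: "('v \<Rightarrow> 'v \<Rightarrow> bool) \<Rightarrow> 'v word \<Rightarrow> 'v set" where
  "raag_supp E w = {v. \<exists>w'. geodesic_rep E w w' \<and> v \<in> fst ` set w'}"

definition hom_supp :: "'a set \<Rightarrow> ('b \<Rightarrow> 'b \<Rightarrow> bool) \<Rightarrow> ('a \<Rightarrow> 'b word) \<Rightarrow> 'b set" where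
  "hom_supp VL EG f = (\<Union>v\<in>VL. raag_supp EG (f v))"

definition KK_condition :: "'a set \<Rightarrow> ('b \<Rightarrow> 'b \<Rightarrow> bool) \<Rightarrow> ('a \<Rightarrow> 'b word) \<Rightarrow> bool" where
  "KK_condition VL EG f \<longleftrightarrow>
     (\<forall>v\<in>VL. \<forall>x\<in>raag_supp EG (f v). \<forall>y\<in>raag_supp EG (f v). x \<noteq> y \<longrightarrow> EG x y)"

definition full_embedding :: "'a set \<Rightarrow> ('a \<Rightarrow> 'a \<Rightarrow> bool) \<Rightarrow> 'b set \<Rightarrow> ('b \<Rightarrow> 'b \<Rightarrow> bool)
    \<Rightarrow> ('a \<Rightarrow> 'b) \<Rightarrow> bool" where
  "full_embedding VL EL VG EG \<iota> \<longleftrightarrow> inj_on \<iota> VL \<and> \<iota> ` VL \<subseteq> VG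
     \<and> (\<forall>u\<in>VL. \<forall>v\<in>VL. EG (\<iota> u) (\<iota> v) \<longleftrightarrow> EL u v)"

text \<open>The join P_{n 0}^c * ... * P_{n (m-1)}^c: vertex (i, j) is x_j of the i-th path,
1 <= j <= n i.\<close>
definition join_pc_V :: "nat \<Rightarrow> (nat \<Rightarrow> nat) \<Rightarrow> (nat \<times> nat) set" where
  "join_pc_V m n = {(i, j). i < m \<and> 1 \<le> j \<and> j \<le> n i}"

definition join_pc_E :: "nat \<Rightarrow> (nat \<Rightarrow> nat) \<Rightarrow> nat \<times> nat \<Rightarrow> nat \<times> nat \<Rightarrow> bool" where
  "join_pc_E m n p q \<longleftrightarrow> p \<in> join_pc_V m n \<and> q \<in> join_pc_V m n \<and>
     (fst p \<noteq> fst q \<or> (fst p = fst q \<and> snd p \<noteq> snd q \<and> snd p \<noteq> snd q + 1 \<and> snd q \<noteq> snd p + 1))"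

end

theory Submission
  imports Defs
begin


definition compat :: "('v \<Rightarrow> 'v \<Rightarrow> bool) \<Rightarrow> 'v \<Rightarrow> 'v \<Rightarrow> bool" where
  "compat E x y \<longleftrightarrow> x = y \<or> E x y"

definition letters :: "'v word \<Rightarrow> 'v set" where
  "letters w = fst ` set w"

definition invl :: "'v \<times> bool \<Rightarrow> 'v \<times> bool" where
  "invl l = (fst l, \<not> snd l)"

lemma letters_simps[simp]: "letters [] = {}" "letters (l # w) = insert (fst l) (letters w)"
  "letters (a @ b) = letters a \<union> letters b"
  by (auto simp: letters_def)

lemma invl_invl[simp]: "invl (invl l) = l" by (simp add: invl_def)

lemma inv_word_simps[simp]: "inv_word [] = []" "inv_word (l # w) = inv_word w @ [invl l]"
  "inv_word (a @ b) = inv_word b @ inv_word a"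
  by (auto simp: inv_word_def invl_def split: prod.splits)

lemma inv_word_inv_word[simp]: "inv_word (inv_word w) = w"
  by (induction w) auto

lemma letters_inv_word[simp]: "letters (inv_word w) = letters w"
  by (induction w) (auto simp: invl_def)

lemma length_inv_word[simp]: "length (inv_word w) = length w"
  by (simp add: inv_word_def)

lemma raag_eq_refl[simp, intro]: "raag_eq E w w"
  by (simp add: raag_eq_def)

lemma raag_eq_sym[sym]: "raag_eq E a b \<Longrightarrow> raag_eq E b a"
  unfolding raag_eq_def by (rule equivclp_sym)

lemma raag_eq_trans[trans]: "raag_eq E a b \<Longrightarrow> raag_eq E b c \<Longrightarrow> raag_eq E a c"
  unfolding raag_eq_def by (rule equivclp_trans)

lemma raag_eq_step: "raag_step E a b \<Longrightarrow> raag_eq E a b"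
  unfolding raag_eq_def by (rule r_into_equivclp)

lemma equivclp_map:
  assumes "equivclp r x y" and "\<And>x y. r x y \<Longrightarrow> equivclp s (f x) (f y)"
  shows "equivclp s (f x) (f y)"
  using assms(1)
proof (induction rule: equivclp_induct)
  case base then show ?case by simp
next
  case (step y z)
  then show ?case
    by (meson assms(2) equivclp_sym equivclp_trans)
qed

lemma equivclp_inv:
  assumes "equivclp r x y" and "\<And>x y. r x y \<Longrightarrow> f x = f y"
  shows "f x = f y"
  using assms(1)
proof (induction rule: equivclp_induct)
  case base then show ?case by simp
next
  case (step y z)
  then show ?case using assms(2) by metis
qed

lemma raag_step_ctx: "raag_step E a b \<Longrightarrow> raag_step E (p @ a @ q) (p @ b @ q)"
proof (induction rule: raag_step.induct)
  case (cancel xs v b ys)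
  have "raag_step E ((p @ xs) @ [(v, b), (v, \<not> b)] @ (ys @ q)) ((p @ xs) @ (ys @ q))"
    by (rule raag_step.cancel)
  then show ?case by simp
next
  case (commute u v xs a b ys)
  have "raag_step E ((p @ xs) @ [(u, a), (v, b)] @ (ys @ q)) ((p @ xs) @ [(v, b), (u, a)] @ (ys @ q))"
    using raag_step.commute[of E u v "p @ xs" a b "ys @ q"] commute by simp
  then show ?case by simp
qed

lemma raag_eq_ctx: "raag_eq E a b \<Longrightarrow> raag_eq E (p @ a @ q) (p @ b @ q)"
  unfolding raag_eq_def
  by (erule equivclp_map[where f="\<lambda>x. p @ x @ q"]) (auto intro: raag_step_ctx)

lemma raag_eq_append: "raag_eq E a a' \<Longrightarrow> raag_eq E b b' \<Longrightarrow> raag_eq E (a @ b) (a' @ b')"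
proof -
  assume 1: "raag_eq E a a'" and 2: "raag_eq E b b'"
  have "raag_eq E ([] @ a @ b) ([] @ a' @ b)" by (rule raag_eq_ctx[OF 1])
  moreover have "raag_eq E (a' @ b @ []) (a' @ b' @ [])" by (rule raag_eq_ctx[OF 2])
  ultimately show ?thesis by (auto intro: raag_eq_trans)
qed

lemma raag_eq_Cons: "raag_eq E a a' \<Longrightarrow> raag_eq E (l # a) (l # a')"
  using raag_eq_append[of E "[l]" "[l]" a a'] by simp

lemma raag_eq_cancel2: "raag_eq E ([l, invl l]) []"
proof -
  obtain v b where l: "l = (v, b)" by (cases l)
  have "raag_step E ([] @ [(v, b), (v, \<not> b)] @ []) ([] @ [])" by (rule raag_step.cancel)
  then show ?thesis by (auto simp: l invl_def intro: raag_eq_step)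
qed

lemma raag_eq_cancel_inv: "raag_eq E (w @ inv_word w) []"
proof (induction w)
  case Nil then show ?case by simp
next
  case (Cons l w)
  have "raag_eq E ((l # w) @ inv_word (l # w)) ([l] @ (w @ inv_word w) @ [invl l])" by simp
  also have "raag_eq E \<dots> ([l] @ [] @ [invl l])" by (rule raag_eq_ctx[OF Cons])
  also have "raag_eq E \<dots> []" using raag_eq_cancel2 by simp
  finally show ?case .
qed

lemma raag_eq_cancel_inv2: "raag_eq E (inv_word w @ w) []"
  using raag_eq_cancel_inv[of E "inv_word w"] by simp

lemma raag_step_inv: "raag_step E a b \<Longrightarrow> raag_eq E (inv_word a) (inv_word b)"
proof (induction rule: raag_step.induct)
  case (cancel xs v b ys)
  have "raag_step E (inv_word ys @ [(v, b), (v, \<not> b)] @ inv_word xs) (inv_word ys @ inv_word xs)"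
    by (rule raag_step.cancel)
  then show ?case by (auto simp: invl_def intro: raag_eq_step)
next
  case (commute u v xs a b ys)
  have "raag_step E (inv_word ys @ [(u, \<not>a), (v, \<not>b)] @ inv_word xs) (inv_word ys @ [(v, \<not>b), (u, \<not>a)] @ inv_word xs)"
    using raag_step.commute[of E u v "inv_word ys" "\<not>a" "\<not>b" "inv_word xs"] commute by simp
  then show ?case by (auto simp: invl_def intro!: raag_eq_sym[OF raag_eq_step])
qed

lemma raag_eq_inv: "raag_eq E a b \<Longrightarrow> raag_eq E (inv_word a) (inv_word b)"
  unfolding raag_eq_def
  by (erule equivclp_map[where f=inv_word]) (auto dest: raag_step_inv simp: raag_eq_def)

lemma raag_eq_Nil_inv: "raag_eq E a [] \<Longrightarrow> raag_eq E (inv_word a) []"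
  using raag_eq_inv by fastforce

lemma compat_sym: "(\<And>x y. E x y \<Longrightarrow> E y x) \<Longrightarrow> compat E x y \<Longrightarrow> compat E y x"
  by (auto simp: compat_def)

lemma raag_eq_swap_letters:
  assumes "compat E u v"
  shows "raag_eq E [(u, a), (v, b)] [(v, b), (u, a)]"
proof (cases "u = v")
  case True
  show ?thesis
  proof (cases "a = b")
    case True then show ?thesis using \<open>u = v\<close> by simp
  next
    case False
    then have "b = (\<not> a)" by auto
    have 1: "raag_eq E [(u, a), (v, b)] []" using raag_eq_cancel2[of E "(u,a)"] \<open>u = v\<close> \<open>b = (\<not> a)\<close>
      by (simp add: invl_def)
    have 2: "raag_eq E [(v, b), (u, a)] []" using raag_eq_cancel2[of E "(v,b)"] \<open>u = v\<close> \<open>b = (\<not> a)\<close>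
      by (simp add: invl_def)
    show ?thesis using 1 2 by (meson raag_eq_sym raag_eq_trans)
  qed
next
  case False
  then have "E u v" using assms by (simp add: compat_def)
  have "raag_step E ([] @ [(u, a), (v, b)] @ []) ([] @ [(v, b), (u, a)] @ [])"
    using raag_step.commute[of E u v "[]" a b "[]"] \<open>E u v\<close> by simp
  then show ?thesis by (auto intro: raag_eq_step)
qed

lemma raag_eq_letter_past:
  assumes "\<forall>y\<in>letters w. compat E x y"
  shows "raag_eq E ((x, b) # w) (w @ [(x, b)])"
  using assms
proof (induction w)
  case Nil then show ?case by simp
next
  case (Cons l w)
  obtain y c where l: "l = (y, c)" by (cases l)
  have "raag_eq E ((x, b) # l # w) ([] @ [(x, b), (y, c)] @ w)" by (simp add: l)
  also have "raag_eq E \<dots> ([] @ [(y, c), (x, b)] @ w)"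
    by (rule raag_eq_ctx, rule raag_eq_swap_letters) (use Cons.prems l in auto)
  also have "raag_eq E \<dots> ([(y, c)] @ ((x, b) # w))" by simp
  also have "raag_eq E \<dots> ([(y, c)] @ (w @ [(x, b)]))"
    by (rule raag_eq_append) (use Cons in auto)
  finally show ?case by (simp add: l)
qed

lemma raag_eq_commute_words:
  assumes "\<forall>x\<in>letters a. \<forall>y\<in>letters b. compat E x y"
  shows "raag_eq E (a @ b) (b @ a)"
  using assms
proof (induction a)
  case Nil then show ?case by simp
next
  case (Cons l a)
  obtain x c where l: "l = (x, c)" by (cases l)
  have "raag_eq E ((l # a) @ b) ([l] @ (a @ b))" by simp
  also have "raag_eq E \<dots> ([l] @ (b @ a))"
    by (rule raag_eq_append) (use Cons in auto)
  also have "raag_eq E \<dots> (((x, c) # b) @ a)" by (simp add: l)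
  also have "raag_eq E \<dots> ((b @ [(x, c)]) @ a)"
    by (rule raag_eq_append, rule raag_eq_letter_past) (use Cons.prems l in auto)
  finally show ?case by (simp add: l)
qed

definition proj :: "'v set \<Rightarrow> 'v word \<Rightarrow> 'v word" where
  "proj W w = filter (\<lambda>l. fst l \<in> W) w"

lemma proj_simps[simp]: "proj W [] = []" "proj W (a @ b) = proj W a @ proj W b"
  "proj W (l # w) = (if fst l \<in> W then l # proj W w else proj W w)"
  by (auto simp: proj_def)

lemma proj_inv_word[simp]: "proj W (inv_word w) = inv_word (proj W w)"
  by (induction w) (auto simp: invl_def)

lemma letters_proj: "letters (proj W w) = letters w \<inter> W"
  by (auto simp: proj_def letters_def)

lemma raag_step_proj: "raag_step E a b \<Longrightarrow> raag_eq E (proj W a) (proj W b)"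
proof (induction rule: raag_step.induct)
  case (cancel xs v b ys)
  show ?case
  proof (cases "v \<in> W")
    case True
    have "raag_step E (proj W xs @ [(v, b), (v, \<not> b)] @ proj W ys) (proj W xs @ proj W ys)"
      by (rule raag_step.cancel)
    then show ?thesis using True by (auto intro: raag_eq_step)
  next
    case False then show ?thesis by simp
  qed
next
  case (commute u v xs a b ys)
  show ?case
  proof (cases "u \<in> W \<and> v \<in> W")
    case True
    have "raag_step E (proj W xs @ [(u, a), (v, b)] @ proj W ys) (proj W xs @ [(v, b), (u, a)] @ proj W ys)"
      using raag_step.commute[of E u v "proj W xs" a b "proj W ys"] commute by simp
    then show ?thesis using True by (auto intro: raag_eq_step)
  next
    case False then show ?thesis by auto
  qed
qed

lemma raag_eq_proj: "raag_eq E a b \<Longrightarrow> raag_eq E (proj W a) (proj W b)"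
  unfolding raag_eq_def
  by (erule equivclp_map[where f="proj W"]) (auto dest: raag_step_proj simp: raag_eq_def)

lemma raag_eq_split:
  assumes "\<forall>x\<in>letters w \<inter> W. \<forall>y\<in>letters w - W. compat E x y"
    and sym: "\<And>x y. E x y \<Longrightarrow> E y x"
  shows "raag_eq E w (proj W w @ proj (- W) w)"
  using assms
proof (induction w)
  case Nil then show ?case by simp
next
  case (Cons l w)
  obtain x c where l: "l = (x, c)" by (cases l)
  have IH: "raag_eq E w (proj W w @ proj (- W) w)" using Cons sym by auto
  show ?case
  proof (cases "x \<in> W")
    case True
    have "raag_eq E (l # w) (l # (proj W w @ proj (- W) w))" by (rule raag_eq_Cons[OF IH])
    then show ?thesis using True l by simp
  next
    case False
    have "raag_eq E (l # w) ([] @ ((x, c) # proj W w) @ proj (- W) w)" using IH l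
      by (simp add: raag_eq_Cons)
    also have "raag_eq E \<dots> ([] @ (proj W w @ [(x, c)]) @ proj (- W) w)"
    proof (rule raag_eq_ctx, rule raag_eq_letter_past, rule ballI)
      fix y assume "y \<in> letters (proj W w)"
      then have "y \<in> letters (l # w) \<inter> W" by (auto simp: letters_proj)
      moreover have "x \<in> letters (l # w) - W" using False l by auto
      ultimately have "compat E y x" using Cons.prems by blast
      then show "compat E x y" using sym by (auto simp: compat_def)
    qed
    finally show ?thesis using False l by simp
  qed
qed


definition hl :: "('a \<Rightarrow> 'b word) \<Rightarrow> 'a \<times> bool \<Rightarrow> 'b word" where
  "hl f l = (if snd l then inv_word (f (fst l)) else f (fst l))"

lemma hom_ext_simps[simp]: "hom_ext f [] = []" "hom_ext f (l # w) = hl f l @ hom_ext f w"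
  "hom_ext f (a @ b) = hom_ext f a @ hom_ext f b"
  by (auto simp: hom_ext_def hl_def split: prod.splits)

lemma hl_invl[simp]: "hl f (invl l) = inv_word (hl f l)"
  by (auto simp: hl_def invl_def)

lemma hom_ext_inv[simp]: "hom_ext f (inv_word w) = inv_word (hom_ext f w)"
  by (induction w) auto

lemma letters_hom_ext: "letters (hom_ext f w) \<subseteq> (\<Union>v\<in>letters w. letters (f v))"
  by (induction w) (auto simp: hl_def)

lemma raag_eq_hom_ext:
  assumes "\<forall>v\<in>letters w. raag_eq E (f v) (g v)"
  shows "raag_eq E (hom_ext f w) (hom_ext g w)"
  using assms
proof (induction w)
  case Nil then show ?case by simp
next
  case (Cons l w)
  have "raag_eq E (hl f l) (hl g l)"
    using Cons.prems by (auto simp: hl_def intro: raag_eq_inv)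
  then show ?case using Cons by (auto intro: raag_eq_append)
qed

lemma proj_hom_ext: "proj W (hom_ext f w) = hom_ext (\<lambda>v. proj W (f v)) w"
  by (induction w) (auto simp: hl_def)

lemma hom_ext_cong: "(\<And>v. v \<in> letters w \<Longrightarrow> f v = g v) \<Longrightarrow> hom_ext f w = hom_ext g w"
  by (induction w) (auto simp: hl_def)

section \<open>Exponent sums\<close>

definition sgnl :: "bool \<Rightarrow> int" where "sgnl b = (if b then -1 else 1)"

definition expw :: "'v word \<Rightarrow> 'v \<Rightarrow> int" where
  "expw w x = sum_list (map (\<lambda>l. if fst l = x then sgnl (snd l) else 0) w)"

lemma expw_simps[simp]: "expw [] x = 0" "expw (l # w) x = (if fst l = x then sgnl (snd l) else 0) + expw w x"
  "expw (a @ b) x = expw a x + expw b x"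
  by (auto simp: expw_def)

lemma expw_inv[simp]: "expw (inv_word w) x = - expw w x"
  by (induction w) (auto simp: invl_def sgnl_def)

lemma expw_nonzero: "expw w x \<noteq> 0 \<Longrightarrow> x \<in> letters w"
  by (induction w) (auto split: if_splits)

lemma expw_notin: "x \<notin> letters w \<Longrightarrow> expw w x = 0"
  using expw_nonzero[of w x] by blast

lemma raag_step_expw: "raag_step E a b \<Longrightarrow> expw a = expw b"
  by (induction rule: raag_step.induct) (auto simp: sgnl_def fun_eq_iff)

lemma raag_eq_expw: "raag_eq E a b \<Longrightarrow> expw a = expw b"
  unfolding raag_eq_def by (erule equivclp_inv) (rule raag_step_expw)

lemma expw_hl: "expw (hl f l) x = sgnl (snd l) * expw (f (fst l)) x"
  by (auto simp: hl_def sgnl_def)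

lemma expw_hom_ext: "expw (hom_ext f w) x = sum_list (map (\<lambda>l. sgnl (snd l) * expw (f (fst l)) x) w)"
  by (induction w) (auto simp: expw_hl)

lemma length_ge_abs_expw: "\<bar>expw w x\<bar> \<le> int (length (filter (\<lambda>l. fst l = x) w))"
  by (induction w) (auto simp: sgnl_def)

section \<open>Powers and clique normal form\<close>

definition powl :: "'v \<Rightarrow> int \<Rightarrow> 'v word" where
  "powl v k = replicate (nat \<bar>k\<bar>) (v, k < 0)"

definition pw :: "'v list \<Rightarrow> ('v \<Rightarrow> int) \<Rightarrow> 'v word" where
  "pw L e = concat (map (\<lambda>x. powl x (e x)) L)"

definition clique :: "('v \<Rightarrow> 'v \<Rightarrow> bool) \<Rightarrow> 'v set \<Rightarrow> bool" where
  "clique E K \<longleftrightarrow> (\<forall>x\<in>K. \<forall>y\<in>K. compat E x y)"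

lemma pw_simps[simp]: "pw [] e = []" "pw (x # L) e = powl x (e x) @ pw L e"
  by (auto simp: pw_def)

lemma letters_powl: "letters (powl v k) \<subseteq> {v}"
  by (auto simp: powl_def letters_def)

lemma letters_pw: "letters (pw L e) \<subseteq> set L"
proof (induction L)
  case (Cons a L)
  then show ?case using letters_powl[of a "e a"] by auto
qed simp

lemma expw_powl: "expw (powl v k) x = (if x = v then k else 0)"
proof -
  have "expw (replicate n (v, b)) x = (if x = v then int n * sgnl b else 0)" for n b
    by (induction n) (auto simp: algebra_simps)
  then show ?thesis by (auto simp: powl_def sgnl_def)
qed

lemma expw_pw: "distinct L \<Longrightarrow> expw (pw L e) x = (if x \<in> set L then e x else 0)"
  by (induction L) (auto simp: expw_powl)

lemma pw_cong: "(\<And>x. x \<in> set L \<Longrightarrow> e x = e' x) \<Longrightarrow> pw L e = pw L e'"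
  by (induction L) auto

lemma length_powl: "length (powl v k) = nat \<bar>k\<bar>"
  by (simp add: powl_def)

lemma powl_cons: "raag_eq E ((x, b) # powl x k) (powl x (k + sgnl b))"
proof (cases b)
  case True
  show ?thesis
  proof (cases "k > 0")
    case True
    then have "powl x k = (x, False) # powl x (k - 1)"
      by (simp add: powl_def nat_diff_distrib' replicate_Suc[symmetric] Suc_nat_eq_nat_zadd1)
    then have "(x, b) # powl x k = [] @ [(x, True), (x, \<not> True)] @ powl x (k - 1)" using \<open>b\<close> by simp
    moreover have "raag_eq E ([] @ [(x, True), (x, \<not> True)] @ powl x (k - 1)) ([] @ powl x (k - 1))"
      by (rule raag_eq_step, rule raag_step.cancel)
    ultimately show ?thesis using \<open>b\<close> by (simp add: sgnl_def)
  next
    case False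
    have "(x, b) # powl x k = powl x (k + sgnl b)"
    proof (cases "k = 0")
      case True then show ?thesis using \<open>b\<close> by (simp add: powl_def sgnl_def)
    next
      case False
      then have "k < 0" using \<open>\<not> k > 0\<close> by simp
      then have "nat \<bar>k - 1\<bar> = Suc (nat \<bar>k\<bar>)" by simp
      then show ?thesis using \<open>b\<close> \<open>k < 0\<close> by (simp add: powl_def sgnl_def)
    qed
    then show ?thesis by simp
  qed
next
  case False
  show ?thesis
  proof (cases "k < 0")
    case True
    have "powl x k = (x, True) # powl x (k + 1)"
    proof (cases "k = -1")
      case True then show ?thesis by (simp add: powl_def)
    next
      case False
      then have "k + 1 < 0" "nat \<bar>k\<bar> = Suc (nat \<bar>k + 1\<bar>)" using \<open>k < 0\<close> by auto
      then show ?thesis using \<open>k < 0\<close> by (simp add: powl_def)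
    qed
    then have "(x, b) # powl x k = [] @ [(x, False), (x, \<not> False)] @ powl x (k + 1)" using \<open>\<not>b\<close> by simp
    moreover have "raag_eq E ([] @ [(x, False), (x, \<not> False)] @ powl x (k + 1)) ([] @ powl x (k + 1))"
      by (rule raag_eq_step, rule raag_step.cancel)
    ultimately show ?thesis using \<open>\<not>b\<close> by (simp add: sgnl_def)
  next
    case False
    then have "k \<ge> 0" by simp
    then have "nat \<bar>k + 1\<bar> = Suc (nat \<bar>k\<bar>)" by simp
    then have "(x, b) # powl x k = powl x (k + sgnl b)" using \<open>\<not>b\<close> \<open>k \<ge> 0\<close>
      by (simp add: powl_def sgnl_def)
    then show ?thesis by simp
  qed
qed

lemma pw_ins:
  assumes "x \<in> set L" "distinct L" "clique E (set L)"
  shows "raag_eq E ((x, b) # pw L e) (pw L (e(x := e x + sgnl b)))"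
  using assms
proof (induction L)
  case Nil then show ?case by simp
next
  case (Cons y L)
  show ?case
  proof (cases "y = x")
    case True
    have c: "pw L (e(x := e x + sgnl b)) = pw L e"
      by (rule pw_cong) (use Cons.prems True in auto)
    have "raag_eq E (((x, b) # powl x (e x)) @ pw L e) (powl x (e x + sgnl b) @ pw L e)"
      by (rule raag_eq_append[OF powl_cons]) simp
    moreover have "pw (y # L) (e(x := e x + sgnl b)) = powl x (e x + sgnl b) @ pw L (e(x := e x + sgnl b))"
      using True by (simp only: pw_simps fun_upd_same)
    ultimately show ?thesis using True by (simp only: c pw_simps append_Cons)
  next
    case False
    have cl: "clique E (set L)" using Cons.prems by (auto simp: clique_def)
    have "raag_eq E ((x, b) # pw (y # L) e) (((x, b) # powl y (e y)) @ pw L e)" by simp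
    also have "raag_eq E \<dots> ((powl y (e y) @ [(x, b)]) @ pw L e)"
    proof (rule raag_eq_append[OF raag_eq_letter_past], rule ballI)
      fix z assume "z \<in> letters (powl y (e y))"
      then have "z = y" using letters_powl[of y "e y"] by blast
      then show "compat E x z" using Cons.prems by (auto simp: clique_def)
    qed simp
    also have "raag_eq E \<dots> (powl y (e y) @ ((x, b) # pw L e))" by simp
    also have "raag_eq E \<dots> (powl y (e y) @ pw L (e(x := e x + sgnl b)))"
    proof (rule raag_eq_append[OF raag_eq_refl])
      show "raag_eq E ((x,b) # pw L e) (pw L (e(x := e x + sgnl b)))"
        by (rule Cons.IH) (use Cons.prems False cl in auto)
    qed
    finally show ?thesis by (simp only: pw_simps fun_upd_other[OF False] append_Cons)
  qed
qed

lemma clique_normal_form: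
  assumes "distinct L" "clique E (set L)" "letters w \<subseteq> set L"
  shows "raag_eq E w (pw L (expw w))"
  using assms
proof (induction w)
  case Nil
  have "pw L (expw []) = pw L (\<lambda>_. 0)" by (rule arg_cong[where f="pw L"]) (rule ext, simp)
  moreover have "pw L (\<lambda>_. 0) = []" by (induction L) (auto simp: powl_def)
  ultimately show ?case by simp
next
  case (Cons l w)
  obtain x b where l: "l = (x, b)" by (cases l)
  have "raag_eq E (l # w) ((x, b) # pw L (expw w))"
    using Cons l by (auto intro: raag_eq_Cons)
  also have "raag_eq E \<dots> (pw L ((expw w)(x := expw w x + sgnl b)))"
    by (rule pw_ins) (use Cons.prems l in auto)
  also have "pw L ((expw w)(x := expw w x + sgnl b)) = pw L (expw (l # w))"
    by (rule pw_cong) (auto simp: l)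
  finally show ?case .
qed

lemma clique_eq:
  assumes "clique E K" "finite K" "letters a \<subseteq> K" "letters b \<subseteq> K" "expw a = expw b"
  shows "raag_eq E a b"
proof -
  obtain L where L: "distinct L" "set L = K" using finite_distinct_list[OF assms(2)] by blast
  have "raag_eq E a (pw L (expw a))" by (rule clique_normal_form) (use L assms in auto)
  moreover have "raag_eq E b (pw L (expw b))" by (rule clique_normal_form) (use L assms in auto)
  ultimately show ?thesis using assms(5) by (metis raag_eq_sym raag_eq_trans)
qed

lemma clique_eq_Nil:
  assumes "clique E K" "finite K" "letters a \<subseteq> K" "\<And>x. expw a x = 0"
  shows "raag_eq E a []"
  by (rule clique_eq[OF assms(1,2,3)]) (use assms(4) in \<open>auto simp: fun_eq_iff\<close>)

lemma clique_subset: "clique E K \<Longrightarrow> K' \<subseteq> K \<Longrightarrow> clique E K'"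
  by (auto simp: clique_def)

section \<open>Free reduction\<close>

definition push :: "'a \<times> bool \<Rightarrow> ('a \<times> bool) list \<Rightarrow> ('a \<times> bool) list" where
  "push g r = (case r of [] \<Rightarrow> [g] | h # t \<Rightarrow> (if h = invl g then t else g # r))"

definition red :: "('a \<times> bool) list \<Rightarrow> ('a \<times> bool) list" where
  "red w = foldr push w []"

fun reduced :: "('a \<times> bool) list \<Rightarrow> bool" where
  "reduced [] = True"
| "reduced [g] = True"
| "reduced (g # h # t) = (h \<noteq> invl g \<and> reduced (h # t))"

lemma reduced_tl: "reduced (g # t) \<Longrightarrow> reduced t"
  by (cases t) auto

lemma reduced_push: "reduced r \<Longrightarrow> reduced (push g r)"
  by (cases r) (auto simp: push_def dest: reduced_tl)

lemma reduced_foldr: "reduced r \<Longrightarrow> reduced (foldr push w r)"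
  by (induction w) (auto intro: reduced_push)

lemma reduced_red: "reduced (red w)"
  unfolding red_def by (rule reduced_foldr) simp

lemma push_cancel: "reduced r \<Longrightarrow> push (invl g) (push g r) = r"
proof (cases r)
  case Nil then show ?thesis by (simp add: push_def)
next
  case (Cons h t)
  assume red: "reduced r"
  show ?thesis
  proof (cases "h = invl g")
    case True
    have "push g r = t" using Cons True by (simp add: push_def)
    moreover have "push (invl g) t = r"
    proof (cases t)
      case Nil then show ?thesis using Cons True by (simp add: push_def)
    next
      case (Cons h' t')
      then have "h' \<noteq> invl h" using red \<open>r = h # t\<close> by simp
      then have "h' \<noteq> invl (invl g)" using True by simp
      then show ?thesis using Cons \<open>r = h # t\<close> True by (simp add: push_def)
    qed
    ultimately show ?thesis by simp
  next
    case False
    then show ?thesis using Cons by (simp add: push_def)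
  qed
qed

lemma push_cancel': "reduced r \<Longrightarrow> push g (push (invl g) r) = r"
  using push_cancel[of r "invl g"] by simp

lemma foldr_push_push:
  assumes "reduced s" "reduced r"
  shows "foldr push (push g s) r = push g (foldr push s r)"
proof (cases s)
  case Nil then show ?thesis by (simp add: push_def)
next
  case (Cons h t)
  show ?thesis
  proof (cases "h = invl g")
    case True
    have "push g s = t" using Cons True by (simp add: push_def)
    moreover have "reduced (foldr push t r)" using assms Cons by (auto intro: reduced_foldr dest: reduced_tl)
    ultimately show ?thesis using Cons True push_cancel'[of "foldr push t r" g] by simp
  next
    case False
    then show ?thesis using Cons by (simp add: push_def)
  qed
qed

lemma foldr_push_red: "reduced r \<Longrightarrow> foldr push w r = foldr push (red w) r"
proof (induction w)
  case Nil then show ?case by (simp add: red_def)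
next
  case (Cons g w)
  have "foldr push (g # w) r = push g (foldr push (red w) r)" using Cons by simp
  also have "\<dots> = foldr push (push g (red w)) r"
    by (rule foldr_push_push[symmetric]) (use Cons reduced_red in auto)
  finally show ?case by (simp add: red_def)
qed

lemma red_append: "red (a @ b) = foldr push a (red b)"
  by (simp add: red_def)

lemma red_cong: "red a = red a' \<Longrightarrow> red (p @ a @ q) = red (p @ a' @ q)"
proof -
  assume h: "red a = red a'"
  have "red (p @ a @ q) = foldr push p (foldr push a (red q))" by (simp add: red_def)
  also have "foldr push a (red q) = foldr push (red a) (red q)" by (rule foldr_push_red[OF reduced_red])
  also have "\<dots> = foldr push (red a') (red q)" using h by simp
  also have "\<dots> = foldr push a' (red q)" by (rule foldr_push_red[OF reduced_red, symmetric])
  finally show ?thesis by (simp add: red_def)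
qed

lemma red_cancel1: "red (p @ [g, invl g] @ q) = red (p @ q)"
proof -
  have "red (p @ [g, invl g] @ q) = foldr push p (push g (push (invl g) (red q)))" by (simp add: red_def)
  also have "push g (push (invl g) (red q)) = red q" by (rule push_cancel'[OF reduced_red])
  finally show ?thesis by (simp add: red_def)
qed

lemma red_cancel: "red (p @ w @ inv_word w @ q) = red (p @ q)"
proof (induction w arbitrary: p q)
  case Nil then show ?case by simp
next
  case (Cons g w)
  have "red (p @ (g # w) @ inv_word (g # w) @ q) = red ((p @ [g]) @ w @ inv_word w @ ([invl g] @ q))" by simp
  also have "\<dots> = red ((p @ [g]) @ [invl g] @ q)" by (rule Cons)
  also have "\<dots> = red (p @ [g, invl g] @ q)" by simp
  also have "\<dots> = red (p @ q)" by (rule red_cancel1)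
  finally show ?case .
qed

lemma red_reduced: "reduced w \<Longrightarrow> red w = w"
proof (induction w)
  case Nil then show ?case by (simp add: red_def)
next
  case (Cons g w)
  then have "red w = w" by (auto dest: reduced_tl)
  moreover have "push g w = g # w" using Cons.prems by (cases w) (auto simp: push_def)
  ultimately show ?case by (simp add: red_def)
qed

lemma red_hom_ext_inv:
  assumes F: "\<And>u v a b. E u v \<Longrightarrow> red (hl f (u, a) @ hl f (v, b)) = red (hl f (v, b) @ hl f (u, a))"
    and "raag_eq E w w'"
  shows "red (hom_ext f w) = red (hom_ext f w')"
  using assms(2) unfolding raag_eq_def
proof (rule equivclp_inv[where f="\<lambda>w. red (hom_ext f w)"])
  fix x y assume "raag_step E x y"
  then show "red (hom_ext f x) = red (hom_ext f y)"
  proof (induction rule: raag_step.induct)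
    case (cancel xs v b ys)
    have "hl f (v, \<not> b) = inv_word (hl f (v, b))" by (auto simp: hl_def)
    then show ?case using red_cancel[of "hom_ext f xs" "hl f (v, b)" "hom_ext f ys"] by simp
  next
    case (commute u v xs a b ys)
    have "red (hom_ext f xs @ (hl f (u, a) @ hl f (v, b)) @ hom_ext f ys) =
          red (hom_ext f xs @ (hl f (v, b) @ hl f (u, a)) @ hom_ext f ys)"
      by (rule red_cong) (rule F[OF commute])
    then show ?case by simp
  qed
qed

lemma reduced_append:
  "reduced (a @ b) \<longleftrightarrow> reduced a \<and> reduced b \<and> (a = [] \<or> b = [] \<or> hd b \<noteq> invl (last a))"
proof (induction a rule: reduced.induct)
  case 1 then show ?case by simp
next
  case (2 g) then show ?case by (cases b) auto
next
  case (3 g h t) then show ?case by auto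
qed

lemma reduced_inv_word: "reduced w \<Longrightarrow> reduced (inv_word w)"
proof (induction w rule: reduced.induct)
  case (3 g h t)
  have "reduced (inv_word (h # t))" using 3 by auto
  moreover have "invl g \<noteq> invl (last (inv_word (h # t)))"
    using 3(2) by (auto simp: invl_def)
  ultimately show ?case by (auto simp: reduced_append)
qed (auto)


lemma length_pw_le: "distinct L \<Longrightarrow> length (pw L (expw w)) \<le> length (filter (\<lambda>l. fst l \<in> set L) w)"
proof -
  assume d: "distinct L"
  have len: "length (pw L e) = sum_list (map (\<lambda>x. nat \<bar>e x\<bar>) L)" for e
    by (induction L) (auto simp: length_powl)
  have "sum_list (map (\<lambda>x. nat \<bar>expw w x\<bar>) L) \<le> length (filter (\<lambda>l. fst l \<in> set L) w)"
  proof (induction w)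
    case Nil then show ?case by simp
  next
    case (Cons l w)
    obtain y b where l: "l = (y, b)" by (cases l)
    show ?case
    proof (cases "y \<in> set L")
      case False
      have A: "sum_list (map (\<lambda>x. nat \<bar>expw (l # w) x\<bar>) L) = sum_list (map (\<lambda>x. nat \<bar>expw w x\<bar>) L)"
        using False l by (auto intro!: arg_cong[where f=sum_list] map_cong)
      have B: "length (filter (\<lambda>l. fst l \<in> set L) (l # w)) = length (filter (\<lambda>l. fst l \<in> set L) w)"
        using False l by simp
      show ?thesis using A B Cons.IH by linarith
    next
      case True
      have "sum_list (map (\<lambda>x. nat \<bar>expw (l # w) x\<bar>) L) \<le> sum_list (map (\<lambda>x. nat \<bar>expw w x\<bar> + (if x = y then 1 else 0)) L)"
        by (rule sum_list_mono) (auto simp: l sgnl_def)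
      also have "\<dots> = sum_list (map (\<lambda>x. nat \<bar>expw w x\<bar>) L) + sum_list (map (\<lambda>x. if x = y then 1 else 0) L)"
        by (simp add: sum_list_addf)
      also have "sum_list (map (\<lambda>x. if x = y then (1::nat) else 0) L) = 1"
        using d True by (simp add: sum_list_distinct_conv_sum_set sum.delta)
      finally show ?thesis using Cons True l by simp
    qed
  qed
  then show ?thesis by (simp add: len)
qed

lemma distinct_set_singleton: "distinct xs \<Longrightarrow> set xs = {a} \<Longrightarrow> xs = [a]"
proof (cases xs)
  case (Cons b t)
  assume d: "distinct xs" and s: "set xs = {a}"
  then have "b = a" "set t \<subseteq> {a}" "a \<notin> set t" using Cons by auto
  then have "t = []" by (cases t) auto
  then show ?thesis using Cons \<open>b = a\<close> by simp
qed simp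

lemma hom_ext_proj_single:
  "hom_ext (\<lambda>x. if x \<in> W then [(x, False)] else []) w = proj W w"
  by (induction w) (auto simp: hl_def invl_def)

lemma proj_pw: "proj W (pw L e) = pw (filter (\<lambda>x. x \<in> W) L) e"
proof (induction L)
  case (Cons x L)
  have "proj W (powl x k) = (if x \<in> W then powl x k else [])" for k
    by (simp add: powl_def proj_def)
  then show ?case using Cons by simp
qed simp

lemma reduced_powl: "reduced (powl x k)"
proof -
  have "reduced (replicate n (x, b))" for n b
    by (induction n rule: nat_less_induct) (case_tac n; case_tac "n - 1"; auto simp: invl_def)
  then show ?thesis by (simp add: powl_def)
qed

lemma hd_powl: "k \<noteq> 0 \<Longrightarrow> powl x k \<noteq> [] \<and> fst (hd (powl x k)) = x \<and> fst (last (powl x k)) = x"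
  by (simp add: powl_def)

locale setting =
  fixes m :: nat and n :: "nat \<Rightarrow> nat" and VG :: "'b set" and EG :: "'b \<Rightarrow> 'b \<Rightarrow> bool"
    and \<psi> :: "nat \<times> nat \<Rightarrow> 'b word"
  assumes n_pos: "\<forall>i<m. n i \<ge> 1"
    and fsg: "finite_simple_graph VG EG"
    and hom: "raag_hom (join_pc_V m n) (join_pc_E m n) VG EG \<psi>"
    and inj: "raag_hom_injective (join_pc_V m n) (join_pc_E m n) EG \<psi>"
    and KK: "KK_condition (join_pc_V m n) EG \<psi>"
begin

abbreviation "VL \<equiv> join_pc_V m n"
abbreviation "EL \<equiv> join_pc_E m n"

definition e :: "nat \<times> nat \<Rightarrow> 'b \<Rightarrow> int" where "e v = expw (\<psi> v)"
definition S :: "nat \<times> nat \<Rightarrow> 'b set" where "S v = {x. e v x \<noteq> 0}"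
definition Lv :: "nat \<times> nat \<Rightarrow> 'b list" where "Lv v = (SOME L. distinct L \<and> set L = S v)"
definition P :: "nat \<times> nat \<Rightarrow> 'b word" where "P v = pw (Lv v) (e v)"

lemma EG_sym: "EG x y \<Longrightarrow> EG y x" using fsg by (auto simp: finite_simple_graph_def)
lemma EG_irrefl: "\<not> EG x x" using fsg by (auto simp: finite_simple_graph_def)
lemma EG_V: "EG x y \<Longrightarrow> x \<in> VG \<and> y \<in> VG" using fsg by (auto simp: finite_simple_graph_def)
lemma VG_fin: "finite VG" using fsg by (auto simp: finite_simple_graph_def)
lemma compat_sym': "compat EG x y \<Longrightarrow> compat EG y x" by (auto simp: compat_def EG_sym)

lemma psi_over: "v \<in> VL \<Longrightarrow> letters (\<psi> v) \<subseteq> VG"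
  using hom by (auto simp: raag_hom_def word_over_def letters_def)

lemma psi_comm: "v \<in> VL \<Longrightarrow> u \<in> VL \<Longrightarrow> EL u v \<Longrightarrow> raag_eq EG (\<psi> u @ \<psi> v) (\<psi> v @ \<psi> u)"
  using hom by (auto simp: raag_hom_def)

lemma inj': "letters w1 \<subseteq> VL \<Longrightarrow> letters w2 \<subseteq> VL \<Longrightarrow> raag_eq EG (hom_ext \<psi> w1) (hom_ext \<psi> w2) \<Longrightarrow> raag_eq EL w1 w2"
  using inj by (auto simp: raag_hom_injective_def word_over_def letters_def)

lemma S_letters: "S v \<subseteq> letters (\<psi> v)"
  by (auto simp: S_def e_def intro: expw_nonzero)

lemma S_fin: "finite (S v)"
  by (rule finite_subset[OF S_letters]) (simp add: letters_def)

lemma S_VG: "v \<in> VL \<Longrightarrow> S v \<subseteq> VG" using S_letters psi_over by blast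

lemma Lv: "distinct (Lv v) \<and> set (Lv v) = S v"
proof -
  obtain L where "distinct L \<and> set L = S v" using finite_distinct_list[OF S_fin] by blast
  then show ?thesis unfolding Lv_def by (rule someI)
qed

lemma expw_P: "expw (P v) = e v"
  by (rule ext) (auto simp: P_def expw_pw Lv S_def)

lemma letters_P: "letters (P v) \<subseteq> S v" using letters_pw Lv unfolding P_def by metis

lemma geodesic_exists: "\<exists>g. geodesic_rep EG w g"
proof -
  define k where "k = (LEAST k. \<exists>w'. raag_eq EG w w' \<and> length w' = k)"
  have "\<exists>w'. raag_eq EG w w' \<and> length w' = k"
    unfolding k_def by (rule LeastI[where k="length w"]) auto
  then obtain g where g: "raag_eq EG w g" "length g = k" by blast
  have "length g \<le> length w''" if "raag_eq EG w w''" for w''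
    unfolding g(2) k_def by (rule Least_le) (use that in auto)
  then show ?thesis using g by (auto simp: geodesic_rep_def)
qed

lemma supp_clique: "v \<in> VL \<Longrightarrow> clique EG (raag_supp EG (\<psi> v))"
  using KK by (auto simp: KK_condition_def clique_def compat_def)

lemma geodesic_letters:
  assumes "v \<in> VL" "geodesic_rep EG (\<psi> v) g" "x \<in> letters g"
  shows "e v x \<noteq> 0"
proof
  assume ex: "e v x = 0"
  have eqg: "raag_eq EG (\<psi> v) g" using assms by (simp add: geodesic_rep_def)
  then have eg: "expw g = e v" using raag_eq_expw[OF eqg] by (simp add: e_def)
  have lsupp: "letters g \<subseteq> raag_supp EG (\<psi> v)"
    using assms(2) by (auto simp: raag_supp_def letters_def)
  then have cl: "clique EG (letters g)" using supp_clique[OF assms(1)] clique_subset by blast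
  have fin: "finite (letters g)" by (simp add: letters_def)
  obtain L where L: "distinct L" "set L = letters g - {x}"
    using finite_distinct_list[of "letters g - {x}"] fin by blast
  define w' where "w' = pw L (expw g)"
  have "raag_eq EG g w'"
  proof (rule clique_eq[OF cl fin])
    show "letters w' \<subseteq> letters g" using letters_pw[of L] L unfolding w'_def by blast
    show "expw g = expw w'"
    proof (rule ext)
      fix y
      show "expw g y = expw w' y"
      proof (cases "y \<in> set L")
        case True then show ?thesis by (simp add: w'_def expw_pw L(1))
      next
        case False
        then have "y = x \<or> y \<notin> letters g" using L(2) by blast
        then have "expw g y = 0" using ex eg expw_notin by metis
        then show ?thesis using False by (simp add: w'_def expw_pw L(1))
      qed
    qed
  qed simp
  then have "raag_eq EG (\<psi> v) w'" using eqg raag_eq_trans by blast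
  then have "length g \<le> length w'" using assms(2) by (simp add: geodesic_rep_def)
  moreover have "length w' \<le> length (filter (\<lambda>l. fst l \<in> set L) g)"
    unfolding w'_def by (rule length_pw_le[OF L(1)])
  moreover have "length (filter (\<lambda>l. fst l \<in> set L) g) < length g"
  proof -
    obtain l where "l \<in> set g" "fst l = x" using assms(3) by (auto simp: letters_def)
    moreover have "x \<notin> set L" using L by blast
    ultimately show ?thesis using length_filter_less[of l g "\<lambda>l. fst l \<in> set L"] by simp
  qed
  ultimately show False by simp
qed

lemma supp_eq: "v \<in> VL \<Longrightarrow> raag_supp EG (\<psi> v) = S v"
proof
  assume v: "v \<in> VL"
  show "raag_supp EG (\<psi> v) \<subseteq> S v"
  proof
    fix x assume "x \<in> raag_supp EG (\<psi> v)"
    then obtain g where "geodesic_rep EG (\<psi> v) g" "x \<in> letters g" by (auto simp: raag_supp_def letters_def)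
    then show "x \<in> S v" using geodesic_letters[OF v] by (simp add: S_def)
  qed
  show "S v \<subseteq> raag_supp EG (\<psi> v)"
  proof
    fix x assume x: "x \<in> S v"
    obtain g where g: "geodesic_rep EG (\<psi> v) g" using geodesic_exists by blast
    then have "expw g = e v" unfolding geodesic_rep_def e_def by (metis raag_eq_expw)
    then have "x \<in> letters g" using x by (auto simp: S_def intro: expw_nonzero)
    then show "x \<in> raag_supp EG (\<psi> v)" using g by (auto simp: raag_supp_def letters_def)
  qed
qed

lemma S_clique: "v \<in> VL \<Longrightarrow> clique EG (S v)"
  using supp_clique supp_eq by metis

lemma psi_P: "v \<in> VL \<Longrightarrow> raag_eq EG (\<psi> v) (P v)"
proof -
  assume v: "v \<in> VL"
  obtain g where g: "geodesic_rep EG (\<psi> v) g" using geodesic_exists by blast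
  have "letters g \<subseteq> raag_supp EG (\<psi> v)" using g by (auto simp: raag_supp_def letters_def)
  then have lg: "letters g \<subseteq> S v" using supp_eq[OF v] by simp
  have g1: "raag_eq EG (\<psi> v) g" using g by (simp add: geodesic_rep_def)
  have "raag_eq EG g (P v)"
  proof (rule clique_eq[OF S_clique[OF v] S_fin])
    show "letters g \<subseteq> S v" by (rule lg)
    show "letters (P v) \<subseteq> S v" by (rule letters_P)
    have "expw (\<psi> v) = expw g" by (rule raag_eq_expw[OF g1])
    then show "expw g = expw (P v)" by (simp add: expw_P e_def)
  qed
  then show ?thesis using g1 by (rule raag_eq_trans[rotated])
qed

lemma hom_ext_P: "letters w \<subseteq> VL \<Longrightarrow> raag_eq EG (hom_ext \<psi> w) (hom_ext P w)"
  apply (rule raag_eq_hom_ext) using psi_P by blast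

lemma inj_P: "letters w1 \<subseteq> VL \<Longrightarrow> letters w2 \<subseteq> VL \<Longrightarrow> raag_eq EG (hom_ext P w1) (hom_ext P w2) \<Longrightarrow> raag_eq EL w1 w2"
proof -
  assume a: "letters w1 \<subseteq> VL" "letters w2 \<subseteq> VL" "raag_eq EG (hom_ext P w1) (hom_ext P w2)"
  have "raag_eq EG (hom_ext \<psi> w1) (hom_ext P w1)" by (rule hom_ext_P[OF a(1)])
  also have "raag_eq EG \<dots> (hom_ext P w2)" by (rule a(3))
  also have "raag_eq EG \<dots> (hom_ext \<psi> w2)" by (rule raag_eq_sym[OF hom_ext_P[OF a(2)]])
  finally show ?thesis by (rule inj'[OF a(1,2)])
qed

lemma S_nonempty: "v \<in> VL \<Longrightarrow> S v \<noteq> {}"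
proof
  assume v: "v \<in> VL" and "S v = {}"
  then have "P v = []" using Lv[of v] by (simp add: P_def)
  then have "raag_eq EG (hom_ext P [(v, False)]) (hom_ext P [])" by (simp add: hl_def)
  then have "raag_eq EL [(v, False)] []" using inj_P[of "[(v, False)]" "[]"] v by auto
  then have "expw [(v, False)] = expw ([] :: (nat \<times> nat) word)" by (rule raag_eq_expw)
  then have "expw [(v, False)] v = expw ([] :: (nat \<times> nat) word) v" by simp
  then show False by (simp add: sgnl_def)
qed


end


context setting
begin

lemma adj_compat:
  assumes u: "u \<in> VL" and v: "v \<in> VL" and uv: "EL u v" and s: "s \<in> S u" and t: "t \<in> S v"
  shows "compat EG s t"
proof (rule ccontr)
  assume nc: "\<not> compat EG s t"
  then have st: "s \<noteq> t" "\<not> EG s t" "\<not> EG t s" by (auto simp: compat_def EG_sym)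
  have tu: "t \<notin> S u" using S_clique[OF u] s nc unfolding clique_def by blast
  have sv: "s \<notin> S v" using S_clique[OF v] t nc compat_sym' unfolding clique_def by blast
  define W where "W = {s, t}"
  define f where "f = (\<lambda>x. if x \<in> W then [(x, False)] else ([] :: 'b word))"
  have F: "red (hl f (a, c) @ hl f (b, d)) = red (hl f (b, d) @ hl f (a, c))" if "EG a b" for a b c d
  proof -
    have "\<not> (a \<in> W \<and> b \<in> W)" using that st EG_irrefl unfolding W_def by blast
    then have "hl f (a, c) = [] \<or> hl f (b, d) = []" unfolding f_def hl_def by auto
    then show ?thesis by auto
  qed
  have c1: "raag_eq EG (\<psi> u @ \<psi> v) (\<psi> v @ \<psi> u)" by (rule psi_comm[OF v u uv])
  have c2: "raag_eq EG (\<psi> u @ \<psi> v) (P u @ P v)" by (rule raag_eq_append[OF psi_P[OF u] psi_P[OF v]])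
  have c3: "raag_eq EG (\<psi> v @ \<psi> u) (P v @ P u)" by (rule raag_eq_append[OF psi_P[OF v] psi_P[OF u]])
  have "raag_eq EG (P u @ P v) (P v @ P u)"
    using c1 c2 c3 raag_eq_sym raag_eq_trans by metis
  then have r: "red (hom_ext f (P u @ P v)) = red (hom_ext f (P v @ P u))"
    by (rule red_hom_ext_inv[rotated]) (rule F)
  have hf: "hom_ext f w = proj W w" for w unfolding f_def by (rule hom_ext_proj_single)
  have fu: "filter (\<lambda>x. x \<in> W) (Lv u) = [s]"
  proof (rule distinct_set_singleton)
    show "set (filter (\<lambda>x. x \<in> W) (Lv u)) = {s}" using Lv[of u] s tu unfolding W_def by auto
    show "distinct (filter (\<lambda>x. x \<in> W) (Lv u))" using Lv[of u] by simp
  qed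
  have fv: "filter (\<lambda>x. x \<in> W) (Lv v) = [t]"
  proof (rule distinct_set_singleton)
    show "set (filter (\<lambda>x. x \<in> W) (Lv v)) = {t}" using Lv[of v] t sv unfolding W_def by auto
    show "distinct (filter (\<lambda>x. x \<in> W) (Lv v))" using Lv[of v] by simp
  qed
  have pu: "proj W (P u) = powl s (e u s)" unfolding P_def proj_pw fu by simp
  have pv: "proj W (P v) = powl t (e v t)" unfolding P_def proj_pw fv by simp
  have eq: "red (powl s (e u s) @ powl t (e v t)) = red (powl t (e v t) @ powl s (e u s))"
    using r unfolding hf proj_simps pu pv .
  have es: "e u s \<noteq> 0" and et: "e v t \<noteq> 0" using s t by (auto simp: S_def)
  have h1: "fst (hd (powl t (e v t))) \<noteq> fst (invl (last (powl s (e u s))))"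
    using hd_powl[OF es, of s] hd_powl[OF et, of t] st by (simp add: invl_def)
  have h2: "fst (hd (powl s (e u s))) \<noteq> fst (invl (last (powl t (e v t))))"
    using hd_powl[OF es, of s] hd_powl[OF et, of t] st by (simp add: invl_def)
  have r1: "reduced (powl s (e u s) @ powl t (e v t))"
    unfolding reduced_append using h1 reduced_powl by metis
  have r2: "reduced (powl t (e v t) @ powl s (e u s))"
    unfolding reduced_append using h2 reduced_powl by metis
  have "powl s (e u s) @ powl t (e v t) = powl t (e v t) @ powl s (e u s)"
    using eq red_reduced[OF r1] red_reduced[OF r2] by simp
  then have "fst (hd (powl s (e u s) @ powl t (e v t))) = fst (hd (powl t (e v t) @ powl s (e u s)))" by simp
  then show False using hd_powl[OF es, of s] hd_powl[OF et, of t] st by simp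
qed

end


section \<open>Unipotent action on the Lambda side\<close>

definition opL :: "(nat \<times> nat) \<times> bool \<Rightarrow> (nat \<times> nat \<Rightarrow> int) \<Rightarrow> (nat \<times> nat \<Rightarrow> int)" where
  "opL l f = (case l of ((i, j), b) \<Rightarrow> f((i, Suc j) := f (i, Suc j) + sgnl b * f (i, j)))"

definition actL :: "(nat \<times> nat) word \<Rightarrow> (nat \<times> nat \<Rightarrow> int) \<Rightarrow> (nat \<times> nat \<Rightarrow> int)" where
  "actL w f = fold opL w f"

lemma actL_simps[simp]: "actL [] f = f" "actL (l # w) f = actL w (opL l f)"
  "actL (a @ b) f = actL b (actL a f)"
  by (auto simp: actL_def)

lemma opL_cancel: "opL (v, \<not> b) (opL (v, b) f) = f"
  by (cases v) (auto simp: opL_def sgnl_def fun_eq_iff)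

lemma opL_comm:
  assumes "join_pc_E m n u v"
  shows "opL (v, b) (opL (u, a) f) = opL (u, a) (opL (v, b) f)"
proof -
  obtain i j where u: "u = (i, j)" by (cases u)
  obtain i' j' where v: "v = (i', j')" by (cases v)
  have "i \<noteq> i' \<or> (j \<noteq> j' \<and> j \<noteq> Suc j' \<and> j' \<noteq> Suc j)"
    using assms by (auto simp: join_pc_E_def u v)
  then show ?thesis by (auto simp: opL_def u v fun_eq_iff)
qed

lemma raag_eq_actL: "raag_eq (join_pc_E m n) w w' \<Longrightarrow> actL w = actL w'"
  unfolding raag_eq_def
proof (erule equivclp_inv)
  fix x y assume "raag_step (join_pc_E m n) x y"
  then show "actL x = actL y"
  proof (induction rule: raag_step.induct)
    case (cancel xs v b ys)
    then show ?case by (auto simp: fun_eq_iff opL_cancel)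
  next
    case (commute u v xs a b ys)
    then show ?case by (auto simp: fun_eq_iff opL_comm)
  qed
qed

fun vw :: "nat \<Rightarrow> nat \<Rightarrow> (nat \<times> nat) word" where
  "vw i 0 = [((i, 1), False)]"
| "vw i (Suc k) = [((i, k + 2), False)] @ vw i k @ [((i, k + 2), True)]"

lemma letters_vw: "letters (vw i k) = {(i, l) | l. 1 \<le> l \<and> l \<le> k + 1}"
  by (induction k) (auto simp: le_Suc_eq)

definition delta1 :: "nat \<Rightarrow> nat \<times> nat \<Rightarrow> int" where
  "delta1 i = (\<lambda>p. if p = (i, 1) then 1 else 0)"

lemma vw_act: "actL (vw i k) (delta1 i) (i, k + 2) \<noteq> 0 \<and> (\<forall>l\<ge>k + 3. actL (vw i k) (delta1 i) (i, l) = 0)"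
proof (induction k)
  case 0 then show ?case by (auto simp: opL_def delta1_def sgnl_def)
next
  case (Suc k)
  have d: "opL ((i, k + 2), False) (delta1 i) = delta1 i"
    by (auto simp: opL_def delta1_def fun_eq_iff)
  have "actL (vw i (Suc k)) (delta1 i) = opL ((i, k + 2), True) (actL (vw i k) (delta1 i))"
    using d by simp
  then show ?case using Suc by (auto simp: opL_def sgnl_def)
qed

lemma vw_witness:
  "\<not> raag_eq (join_pc_E m n) ([((i, k + 2), False)] @ vw i k) (vw i k @ [((i, k + 2), False)])"
proof
  assume "raag_eq (join_pc_E m n) ([((i, k + 2), False)] @ vw i k) (vw i k @ [((i, k + 2), False)])"
  then have "actL ([((i, k + 2), False)] @ vw i k) = actL (vw i k @ [((i, k + 2), False)])"
    by (rule raag_eq_actL)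
  then have eq: "actL ([((i, k + 2), False)] @ vw i k) (delta1 i) (i, k + 3) = actL (vw i k @ [((i, k + 2), False)]) (delta1 i) (i, k + 3)"
    by simp
  have d: "opL ((i, k + 2), False) (delta1 i) = delta1 i"
    by (auto simp: opL_def delta1_def fun_eq_iff)
  have "actL ([((i, k + 2), False)] @ vw i k) (delta1 i) (i, k + 3) = 0"
    using vw_act[of i k] d by simp
  moreover have "actL (vw i k @ [((i, k + 2), False)]) (delta1 i) (i, k + 3) \<noteq> 0"
    using vw_act[of i k] by (simp add: opL_def sgnl_def)
  ultimately show False using eq by simp
qed

context setting
begin

definition A :: "nat \<Rightarrow> nat \<Rightarrow> 'b set" where
  "A i k = rec_nat (S (i, 1)) (\<lambda>k Ak. {t \<in> S (i, k + 2). \<exists>s\<in>Ak. \<not> compat EG s t}) k"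

lemma A_simps: "A i 0 = S (i, 1)" "A i (Suc k) = {t \<in> S (i, k + 2). \<exists>s\<in>A i k. \<not> compat EG s t}"
  by (auto simp: A_def)

lemma A_sub: "A i k \<subseteq> S (i, k + 1)"
  by (cases k) (auto simp: A_simps)

lemma inVL: "i < m \<Longrightarrow> 1 \<le> j \<Longrightarrow> j \<le> n i \<Longrightarrow> (i, j) \<in> VL"
  by (simp add: join_pc_V_def)

lemma EL_far: "i < m \<Longrightarrow> 1 \<le> j \<Longrightarrow> j \<le> n i \<Longrightarrow> 1 \<le> j' \<Longrightarrow> j' \<le> n i \<Longrightarrow> j + 2 \<le> j' \<Longrightarrow> EL (i, j) (i, j')"
  by (auto simp: join_pc_E_def join_pc_V_def)

lemma cut_chain:
  assumes i: "i < m" and k: "k + 2 \<le> n i"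
  shows "\<exists>W. raag_eq EG (hom_ext P (vw i k)) W \<and> letters W \<subseteq> (\<Union>l\<le>k. A i l)"
  using k
proof (induction k)
  case 0
  have "letters (P (i, 1)) \<subseteq> A i 0" using letters_P by (simp add: A_simps)
  then show ?case by (intro exI[of _ "P (i, 1)"]) (auto simp: hl_def)
next
  case (Suc k)
  then obtain W where W: "raag_eq EG (hom_ext P (vw i k)) W" "letters W \<subseteq> (\<Union>l\<le>k. A i l)" by auto
  define X where "X = P (i, k + 2)"
  define A' where "A' = A i (Suc k)"
  have vX: "(i, k + 2) \<in> VL" using Suc.prems i by (auto simp: join_pc_V_def)
  have lX: "letters X \<subseteq> S (i, k + 2)" using letters_P unfolding X_def by blast
  have split: "raag_eq EG X (proj A' X @ proj (- A') X)"
  proof (rule raag_eq_split)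
    show "\<forall>x\<in>letters X \<inter> A'. \<forall>y\<in>letters X - A'. compat EG x y"
      using S_clique[OF vX] lX unfolding clique_def by blast
  qed (rule EG_sym)
  define a where "a = proj A' X"
  define b where "b = proj (- A') X"
  have cb: "\<forall>x\<in>letters b. \<forall>y\<in>letters W. compat EG x y"
  proof (intro ballI)
    fix x y assume x: "x \<in> letters b" and y: "y \<in> letters W"
    then have xS: "x \<in> S (i, k + 2)" and xA: "x \<notin> A'" using lX by (auto simp: b_def letters_proj)
    obtain l where l: "l \<le> k" "y \<in> A i l" using y W(2) by blast
    show "compat EG x y"
    proof (cases "l = k")
      case True
      show ?thesis
      proof (rule ccontr)
        assume "\<not> compat EG x y"
        then have "\<not> compat EG y x" using compat_sym' by blast
        then have "x \<in> A'" using xS l True unfolding A'_def A_simps by blast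
        then show False using xA by simp
      qed
    next
      case False
      then have "l + 1 + 2 \<le> k + 2" using l by simp
      have "y \<in> S (i, l + 1)" using A_sub l by blast
      moreover have "EL (i, l + 1) (i, k + 2)"
        by (rule EL_far) (use i Suc.prems \<open>l + 1 + 2 \<le> k + 2\<close> in auto)
      ultimately have "compat EG y x"
        using adj_compat[of "(i, l + 1)" "(i, k + 2)" y x] xS i Suc.prems
        by (auto simp: join_pc_E_def)
      then show ?thesis using compat_sym' by blast
    qed
  qed
  have "hom_ext P (vw i (Suc k)) = X @ hom_ext P (vw i k) @ inv_word X"
    by (simp add: X_def hl_def)
  also have "raag_eq EG \<dots> ((a @ b) @ W @ inv_word (a @ b))"
    by (rule raag_eq_append[OF _ raag_eq_append[OF W(1) raag_eq_inv]]) (use split a_def b_def in auto)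
  also have "(a @ b) @ W @ inv_word (a @ b) = a @ (b @ W) @ inv_word b @ inv_word a" by simp
  also have "raag_eq EG \<dots> (a @ (W @ b) @ inv_word b @ inv_word a)"
    by (rule raag_eq_ctx, rule raag_eq_commute_words, rule cb)
  also have "a @ (W @ b) @ inv_word b @ inv_word a = (a @ W) @ (b @ inv_word b) @ inv_word a" by simp
  also have "raag_eq EG \<dots> ((a @ W) @ [] @ inv_word a)"
    by (rule raag_eq_ctx, rule raag_eq_cancel_inv)
  finally have "raag_eq EG (hom_ext P (vw i (Suc k))) (a @ W @ inv_word a)" by simp
  moreover have "letters (a @ W @ inv_word a) \<subseteq> (\<Union>l\<le>Suc k. A i l)"
  proof -
    have "letters a \<subseteq> A i (Suc k)" by (auto simp: a_def A'_def letters_proj)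
    moreover have "(\<Union>l\<le>k. A i l) \<subseteq> (\<Union>l\<le>Suc k. A i l)" by (rule UN_mono) auto
    ultimately show ?thesis using W(2) by auto
  qed
  ultimately show ?case by blast
qed

lemma cut_nonempty:
  assumes i: "i < m" and k: "k + 2 \<le> n i"
  shows "A i (Suc k) \<noteq> {}"
proof
  assume empty: "A i (Suc k) = {}"
  obtain W where W: "raag_eq EG (hom_ext P (vw i k)) W" "letters W \<subseteq> (\<Union>l\<le>k. A i l)"
    using cut_chain[OF i, of k] k by auto
  define X where "X = P (i, k + 2)"
  have lX: "letters X \<subseteq> S (i, k + 2)" using letters_P unfolding X_def by blast
  have cX: "\<forall>x\<in>letters X. \<forall>y\<in>letters W. compat EG x y"
  proof (intro ballI)
    fix x y assume x: "x \<in> letters X" and y: "y \<in> letters W"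
    then have xS: "x \<in> S (i, k + 2)" using lX by blast
    obtain l where l: "l \<le> k" "y \<in> A i l" using y W(2) by blast
    show "compat EG x y"
    proof (cases "l = k")
      case True
      show ?thesis
      proof (rule ccontr)
        assume "\<not> compat EG x y"
        then have "\<not> compat EG y x" using compat_sym' by blast
        then have "x \<in> A i (Suc k)" using xS l True unfolding A_simps by blast
        then show False using empty by simp
      qed
    next
      case False
      then have "l + 1 + 2 \<le> k + 2" using l by simp
      have "y \<in> S (i, l + 1)" using A_sub l by blast
      moreover have "EL (i, l + 1) (i, k + 2)"
        by (rule EL_far) (use i k \<open>l + 1 + 2 \<le> k + 2\<close> in auto)
      ultimately have "compat EG y x"
        using adj_compat[of "(i, l + 1)" "(i, k + 2)" y x] xS i k
        by (auto simp: join_pc_E_def)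
      then show ?thesis using compat_sym' by blast
    qed
  qed
  have h1: "hom_ext P ([((i, k + 2), False)] @ vw i k) = X @ hom_ext P (vw i k)"
    by (simp add: X_def hl_def)
  have h2: "hom_ext P (vw i k @ [((i, k + 2), False)]) = hom_ext P (vw i k) @ X"
    by (simp add: X_def hl_def)
  have "raag_eq EG (hom_ext P ([((i, k + 2), False)] @ vw i k)) (X @ W)"
    unfolding h1 by (rule raag_eq_append[OF raag_eq_refl W(1)])
  also have "raag_eq EG \<dots> (W @ X)" by (rule raag_eq_commute_words[OF cX])
  also have "raag_eq EG \<dots> (hom_ext P (vw i k @ [((i, k + 2), False)]))"
    unfolding h2 by (rule raag_eq_append[OF raag_eq_sym[OF W(1)] raag_eq_refl])
  finally have "raag_eq EG (hom_ext P ([((i, k + 2), False)] @ vw i k)) (hom_ext P (vw i k @ [((i, k + 2), False)]))" .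
  moreover have "letters ([((i, k + 2), False)] @ vw i k) \<subseteq> VL" "letters (vw i k @ [((i, k + 2), False)]) \<subseteq> VL"
    using i k by (auto simp: letters_vw join_pc_V_def)
  ultimately have "raag_eq EL ([((i, k + 2), False)] @ vw i k) (vw i k @ [((i, k + 2), False)])"
    using inj_P by blast
  then show False using vw_witness by blast
qed

end


lemma proj_proj: "proj A (proj B w) = proj (A \<inter> B) w"
  by (induction w) auto

lemma expw_proj: "expw (proj W w) x = (if x \<in> W then expw w x else 0)"
  by (induction w) auto

lemma proj_cong_letters: "(\<And>x. x \<in> letters w \<Longrightarrow> x \<in> A \<longleftrightarrow> x \<in> B) \<Longrightarrow> proj A w = proj B w"
  by (induction w) auto

lemma raag_eq_decomp:
  assumes "distinct cs" "\<forall>x\<in>letters w. col x \<in> set cs"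
    and "\<forall>x\<in>letters w. \<forall>y\<in>letters w. col x \<noteq> col y \<longrightarrow> compat E x y"
    and sym: "\<And>x y. E x y \<Longrightarrow> E y x"
  shows "raag_eq E w (concat (map (\<lambda>c. proj {x. col x = c} w) cs))"
  using assms(1-3)
proof (induction cs arbitrary: w)
  case Nil
  then have "w = []" by (cases w) auto
  then show ?case by simp
next
  case (Cons c cs)
  define W where "W = {x. col x = c}"
  have e1: "raag_eq E w (proj W w @ proj (- W) w)"
  proof (rule raag_eq_split[OF _ sym])
    show "\<forall>x\<in>letters w \<inter> W. \<forall>y\<in>letters w - W. compat E x y"
    proof (intro ballI)
      fix x y assume "x \<in> letters w \<inter> W" "y \<in> letters w - W"
      then have "col x \<noteq> col y" "x \<in> letters w" "y \<in> letters w" by (auto simp: W_def)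
      then show "compat E x y" by (intro Cons.prems(3)[rule_format])
    qed
  qed
  have e2: "raag_eq E (proj (- W) w) (concat (map (\<lambda>c. proj {x. col x = c} (proj (- W) w)) cs))"
  proof (rule Cons.IH)
    show "distinct cs" using Cons.prems by simp
    show "\<forall>x\<in>letters (proj (- W) w). col x \<in> set cs"
      using Cons.prems(2) by (auto simp: letters_proj W_def)
    show "\<forall>x\<in>letters (proj (- W) w). \<forall>y\<in>letters (proj (- W) w). col x \<noteq> col y \<longrightarrow> compat E x y"
    proof (intro ballI impI)
      fix x y assume "x \<in> letters (proj (- W) w)" "y \<in> letters (proj (- W) w)" "col x \<noteq> col y"
      then show "compat E x y" by (intro Cons.prems(3)[rule_format]) (auto simp: letters_proj)
    qed
  qed
  have e3: "map (\<lambda>c. proj {x. col x = c} (proj (- W) w)) cs = map (\<lambda>c. proj {x. col x = c} w) cs"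
  proof (rule map_cong[OF refl])
    fix c' assume "c' \<in> set cs"
    then have "c' \<noteq> c" using Cons.prems(1) by auto
    then have "{x. col x = c'} \<inter> - W = {x. col x = c'}" by (auto simp: W_def)
    then show "proj {x. col x = c'} (proj (- W) w) = proj {x. col x = c'} w" by (simp add: proj_proj)
  qed
  have "raag_eq E w (proj W w @ concat (map (\<lambda>c. proj {x. col x = c} w) cs))"
    by (rule raag_eq_trans[OF e1 raag_eq_append[OF raag_eq_refl e2[unfolded e3]]])
  then show ?case by (simp add: W_def)
qed

lemma raag_eq_concat_Nil: "(\<forall>c\<in>set cs. raag_eq E (f c) []) \<Longrightarrow> raag_eq E (concat (map f cs)) []"
proof (induction cs)
  case (Cons c cs)
  then have "raag_eq E (f c @ concat (map f cs)) ([] @ [])"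
    by (intro raag_eq_append) auto
  then show ?case by simp
qed simp

definition comm :: "'v word \<Rightarrow> 'v word \<Rightarrow> 'v word" where
  "comm a b = a @ b @ inv_word a @ inv_word b"

lemma hom_ext_comm: "hom_ext f (comm a b) = comm (hom_ext f a) (hom_ext f b)"
  by (simp add: comm_def)

lemma letters_comm: "letters (comm a b) = letters a \<union> letters b"
  by (auto simp: comm_def)

lemma comm_Nil_left: "raag_eq E a [] \<Longrightarrow> raag_eq E (comm a b) []"
proof -
  assume a: "raag_eq E a []"
  have "raag_eq E (comm a b) ([] @ b @ inv_word [] @ inv_word b)"
    unfolding comm_def by (rule raag_eq_append[OF a raag_eq_append[OF raag_eq_refl raag_eq_append[OF raag_eq_inv[OF a] raag_eq_refl]]])
  also have "[] @ b @ inv_word [] @ inv_word b = b @ inv_word b" by simp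
  also have "raag_eq E \<dots> []" by (rule raag_eq_cancel_inv)
  finally show ?thesis .
qed

lemma comm_Nil_right: "raag_eq E b [] \<Longrightarrow> raag_eq E (comm a b) []"
proof -
  assume b: "raag_eq E b []"
  have "raag_eq E (comm a b) (a @ [] @ inv_word a @ inv_word [])"
    unfolding comm_def by (rule raag_eq_append[OF raag_eq_refl raag_eq_append[OF b raag_eq_append[OF raag_eq_refl raag_eq_inv[OF b]]]])
  also have "a @ [] @ inv_word a @ inv_word [] = a @ inv_word a" by simp
  also have "raag_eq E \<dots> []" by (rule raag_eq_cancel_inv)
  finally show ?thesis .
qed

lemma comm_commuting:
  assumes "\<forall>x\<in>letters a. \<forall>y\<in>letters b. compat E x y"
  shows "raag_eq E (comm a b) []"
proof -
  have "comm a b = (a @ b) @ inv_word a @ inv_word b" by (simp add: comm_def)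
  also have "raag_eq E \<dots> ((b @ a) @ inv_word a @ inv_word b)"
    by (rule raag_eq_append[OF raag_eq_commute_words[OF assms] raag_eq_refl])
  also have "(b @ a) @ inv_word a @ inv_word b = b @ (a @ inv_word a) @ inv_word b" by simp
  also have "raag_eq E \<dots> (b @ [] @ inv_word b)" by (rule raag_eq_ctx[OF raag_eq_cancel_inv])
  also have "b @ [] @ inv_word b = b @ inv_word b" by simp
  also have "raag_eq E \<dots> []" by (rule raag_eq_cancel_inv)
  finally show ?thesis .
qed

lemma inv_word_powl: "inv_word (powl g c) = powl g (- c)"
  by (auto simp: powl_def inv_word_def invl_def)

lemma hom_ext_powl_const:
  assumes "f v = powl g c"
  shows "hom_ext f (powl v k) = powl g (k * c)"
proof -
  have rep: "hom_ext f (replicate N (v, b)) = concat (replicate N (hl f (v, b)))" for N b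
    by (induction N) auto
  have pm: "powl g (int N * d) = replicate (N * nat \<bar>d\<bar>) (g, d < 0)" for N d
  proof (cases "N = 0")
    case False
    then have "nat \<bar>int N * d\<bar> = N * nat \<bar>d\<bar>" by (simp add: abs_mult nat_mult_distrib)
    moreover have "(int N * d < 0) = (d < 0)" using False by (simp add: mult_less_0_iff)
    ultimately show ?thesis by (simp add: powl_def)
  qed (simp add: powl_def)
  have cr: "concat (replicate N (powl g d)) = powl g (int N * d)" for N d
  proof (induction N)
    case (Suc N)
    have a: "powl g d = replicate (nat \<bar>d\<bar>) (g, d < 0)" by (simp add: powl_def)
    have "powl g d @ powl g (int N * d) = replicate (nat \<bar>d\<bar>) (g, d < 0) @ replicate (N * nat \<bar>d\<bar>) (g, d < 0)"
      by (simp only: a pm)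
    also have "\<dots> = replicate (Suc N * nat \<bar>d\<bar>) (g, d < 0)"
      by (simp only: replicate_add[symmetric] mult_Suc)
    also have "\<dots> = powl g (int (Suc N) * d)" by (simp only: pm)
    finally have "powl g d @ powl g (int N * d) = powl g (int (Suc N) * d)" .
    then show ?case using Suc by simp
  qed (simp add: powl_def)
  have "hl f (v, k < 0) = powl g (if k < 0 then - c else c)"
    using assms by (auto simp: hl_def inv_word_powl)
  then have "hom_ext f (powl v k) = powl g (int (nat \<bar>k\<bar>) * (if k < 0 then - c else c))"
    unfolding powl_def[of v k] rep cr[symmetric] by simp
  also have "int (nat \<bar>k\<bar>) * (if k < 0 then - c else c) = k * c" by auto
  finally show ?thesis .
qed

lemma expw_hom_ext_powl: "expw (hom_ext f (powl v k)) x = k * expw (f v) x"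
proof -
  have "expw (hom_ext f (replicate N (v, b))) x = int N * sgnl b * expw (f v) x" for N b
    by (induction N) (auto simp: expw_hl algebra_simps)
  then show ?thesis by (auto simp: powl_def sgnl_def)
qed

lemma powl_Cons: "c \<noteq> 0 \<Longrightarrow> powl g c = (g, c < 0) # powl g (c - sgnl (c < 0))"
proof -
  assume c: "c \<noteq> 0"
  consider "c = -1" | "c < -1" | "c = 1" | "c > 1" using c by linarith
  then show ?thesis
  proof cases
    case 1 then show ?thesis by (simp add: powl_def sgnl_def)
  next
    case 2
    then have "nat \<bar>c\<bar> = Suc (nat \<bar>c + 1\<bar>)" "c + 1 < 0" by auto
    then show ?thesis using 2 by (simp add: powl_def sgnl_def)
  next
    case 3 then show ?thesis by (simp add: powl_def sgnl_def)
  next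
    case 4
    then have "nat \<bar>c\<bar> = Suc (nat \<bar>c - 1\<bar>)" "\<not> c - 1 < 0" by auto
    then show ?thesis using 4 by (simp add: powl_def sgnl_def)
  qed
qed

lemma push_powl: "push (g, b) (powl g c) = powl g (c + sgnl b)"
proof (cases "c = 0")
  case True then show ?thesis by (cases b) (auto simp: push_def powl_def sgnl_def)
next
  case False
  note pc = powl_Cons[OF False, of g]
  show ?thesis
  proof (cases "(c < 0) = b")
    case True
    have "c + sgnl b \<noteq> 0" "c + sgnl b - sgnl (c + sgnl b < 0) = c" "(c + sgnl b < 0) = b"
      using True False by (cases b; auto simp: sgnl_def)+
    then have "powl g (c + sgnl b) = (g, b) # powl g c"
      using powl_Cons[of "c + sgnl b" g] by simp
    moreover have "push (g, b) (powl g c) = (g, b) # powl g c"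
      using pc True by (simp add: push_def invl_def)
    ultimately show ?thesis by simp
  next
    case nb: False
    have ar: "c - sgnl (c < 0) = c + sgnl b" using nb by (cases b) (auto simp: sgnl_def)
    have h: "(g, c < 0) = invl (g, b)" using nb by (auto simp: invl_def)
    have pc': "powl g c = (g, c < 0) # powl g (c + sgnl b)" using pc unfolding ar .
    have "push (g, b) ((g, c < 0) # powl g (c + sgnl b)) = powl g (c + sgnl b)"
      by (simp only: push_def list.case h if_True refl simp_thms)
    then show ?thesis unfolding pc'[symmetric] .
  qed
qed

lemma foldr_push_powl: "foldr push (powl g a) (powl g b) = powl g (a + b)"
proof (induction "nat \<bar>a\<bar>" arbitrary: a)
  case 0 then show ?case by (simp add: powl_def)
next
  case (Suc N)
  then have a0: "a \<noteq> 0" by auto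
  have "nat \<bar>a - sgnl (a < 0)\<bar> = N" using Suc(2) a0 by (auto simp: sgnl_def)
  then have "foldr push (powl g (a - sgnl (a < 0))) (powl g b) = powl g (a - sgnl (a < 0) + b)"
    using Suc(1) by blast
  then show ?case using powl_Cons[OF a0, of g] by (simp add: push_powl)
qed

lemma red_powl_powl: "red (powl g a @ powl g b) = powl g (a + b)"
  using foldr_push_powl red_append red_reduced[OF reduced_powl] by metis

lemma red_red: "red (red w) = red w"
  by (rule red_reduced[OF reduced_red])

lemma red_inv_cong: "red (inv_word a) = red (inv_word (red a))"
proof -
  have "red (inv_word a) = red (inv_word a @ red a @ inv_word (red a) @ [])"
    using red_cancel[of "inv_word a" "red a" "[]"] by simp
  also have "\<dots> = red (inv_word a @ a @ inv_word (red a) @ [])"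
    by (rule red_cong) (rule red_red)
  also have "\<dots> = red ([] @ inv_word a @ inv_word (inv_word a) @ (inv_word (red a)))" by simp
  also have "\<dots> = red (inv_word (red a))"
    using red_cancel[of "[]" "inv_word a" "inv_word (red a)"] by simp
  finally show ?thesis .
qed

lemma red_cong2: "red (p @ a @ q) = red (p @ red a @ q)"
  by (rule red_cong) (rule red_red[symmetric])


locale tri =
  fixes EG :: "'b \<Rightarrow> 'b \<Rightarrow> bool" and S1 S2 S3 :: "'b set"
  assumes sym: "\<And>x y. EG x y \<Longrightarrow> EG y x"
    and cl1: "clique EG S1" and cl2: "clique EG S2" and cl3: "clique EG S3"
    and c13: "\<And>x y. x \<in> S1 \<Longrightarrow> y \<in> S3 \<Longrightarrow> compat EG x y"
    and H: "\<And>s t r. s \<in> S1 \<Longrightarrow> t \<in> S2 \<Longrightarrow> r \<in> S3 \<Longrightarrow> \<not> compat EG s t \<Longrightarrow> \<not> compat EG t r \<Longrightarrow> s = r"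
    and fin1: "finite S1"
begin

lemma Dsym: "\<not> compat EG x y \<Longrightarrow> \<not> compat EG y x"
  using sym by (auto simp: compat_def)

lemma cl1': "x \<in> S1 \<Longrightarrow> y \<in> S1 \<Longrightarrow> compat EG x y" using cl1 by (auto simp: clique_def)
lemma cl2': "x \<in> S2 \<Longrightarrow> y \<in> S2 \<Longrightarrow> compat EG x y" using cl2 by (auto simp: clique_def)
lemma cl3': "x \<in> S3 \<Longrightarrow> y \<in> S3 \<Longrightarrow> compat EG x y" using cl3 by (auto simp: clique_def)
lemma c31: "x \<in> S3 \<Longrightarrow> y \<in> S1 \<Longrightarrow> compat EG x y" using c13 Dsym by blast

definition Zs :: "'b set" where "Zs = {z. z \<in> S1 \<and> z \<in> S3 \<and> (\<exists>t\<in>S2. \<not> compat EG z t)}"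

definition zof :: "'b \<Rightarrow> 'b" where "zof x = (THE z. z \<in> Zs \<and> \<not> compat EG z x)"

definition col :: "'b \<Rightarrow> (bool + 'b) option" where
  "col x = (if x \<in> Zs then Some (Inr x)
     else if x \<in> S2 \<and> (\<exists>z\<in>Zs. \<not> compat EG z x) then Some (Inr (zof x))
     else if (x \<in> S1 - S3 \<and> (\<exists>t\<in>S2. \<not> compat EG x t)) \<or> (x \<in> S2 \<and> (\<exists>p\<in>S1 - S3. \<not> compat EG p x)) then Some (Inl True)
     else if (x \<in> S3 - S1 \<and> (\<exists>t\<in>S2. \<not> compat EG t x)) \<or> (x \<in> S2 \<and> (\<exists>r\<in>S3 - S1. \<not> compat EG x r)) then Some (Inl False)
     else None)"

lemma zof: assumes "x \<in> S2" "z \<in> Zs" "\<not> compat EG z x" shows "zof x = z"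
  unfolding zof_def
proof (rule the_equality)
  show "z \<in> Zs \<and> \<not> compat EG z x" using assms by simp
  fix z' assume z': "z' \<in> Zs \<and> \<not> compat EG z' x"
  show "z' = z"
  proof (rule H)
    show "z' \<in> S1" using z' by (simp add: Zs_def)
    show "x \<in> S2" by fact
    show "z \<in> S3" using assms by (simp add: Zs_def)
    show "\<not> compat EG z' x" using z' by simp
    show "\<not> compat EG x z" using Dsym assms(3) by blast
  qed
qed

lemma Zs_sub: "Zs \<subseteq> S1" by (auto simp: Zs_def)

lemma Zs_fin: "finite Zs" using finite_subset[OF Zs_sub fin1] .

lemma CC0:
  assumes x: "x \<in> S1 \<union> S3" and y: "y \<in> S2" and D: "\<not> compat EG x y"
  shows "col x = col y \<and> col x \<noteq> None"
proof -
  have xS2: "x \<notin> S2" using cl2' y D by blast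
  have yS1: "y \<notin> S1" using x D cl1' c31 Dsym by blast
  have yS3: "y \<notin> S3" using x D cl3' c13 Dsym by blast
  have yZ: "y \<notin> Zs" using yS1 Zs_sub by blast
  consider "x \<in> S1 \<and> x \<in> S3" | "x \<in> S1 \<and> x \<notin> S3" | "x \<notin> S1 \<and> x \<in> S3" using x by blast
  then show ?thesis
  proof cases
    case 1
    then have xZ: "x \<in> Zs" using y D by (auto simp: Zs_def)
    then have cx: "col x = Some (Inr x)" by (simp add: col_def)
    have "zof y = x" by (rule zof[OF y xZ D])
    then have "col y = Some (Inr x)" using yZ y xZ D by (auto simp: col_def)
    then show ?thesis using cx by simp
  next
    case 2
    then have xZ: "x \<notin> Zs" by (auto simp: Zs_def)
    have cx: "col x = Some (Inl True)" using xZ xS2 2 y D by (auto simp: col_def)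
    have nz: "\<not> (\<exists>z\<in>Zs. \<not> compat EG z y)"
    proof
      assume "\<exists>z\<in>Zs. \<not> compat EG z y"
      then obtain z where z: "z \<in> Zs" "\<not> compat EG z y" by blast
      have "x = z" by (rule H[of x y z]) (use 2 y D z Dsym in \<open>auto simp: Zs_def\<close>)
      then show False using 2 z by (auto simp: Zs_def)
    qed
    have "col y = Some (Inl True)" using yZ nz y 2 D by (auto simp: col_def)
    then show ?thesis using cx by simp
  next
    case 3
    then have xZ: "x \<notin> Zs" by (auto simp: Zs_def)
    have cx: "col x = Some (Inl False)" using xZ xS2 3 y D Dsym by (auto simp: col_def)
    have nz: "\<not> (\<exists>z\<in>Zs. \<not> compat EG z y)"
    proof
      assume "\<exists>z\<in>Zs. \<not> compat EG z y"
      then obtain z where z: "z \<in> Zs" "\<not> compat EG z y" by blast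
      have "z = x" by (rule H[of z y x]) (use 3 y D z Dsym in \<open>auto simp: Zs_def\<close>)
      then show False using 3 z by (auto simp: Zs_def)
    qed
    have np: "\<not> (\<exists>p\<in>S1 - S3. \<not> compat EG p y)"
    proof
      assume "\<exists>p\<in>S1 - S3. \<not> compat EG p y"
      then obtain p where p: "p \<in> S1" "\<not> compat EG p y" by blast
      have "p = x" by (rule H[of p y x]) (use 3 y D p Dsym in auto)
      then show False using 3 p by simp
    qed
    have D': "\<not> compat EG y x" using D Dsym by blast
    have "col y = Some (Inl False)" using yZ nz np yS1 y 3 D' by (auto simp: col_def)
    then show ?thesis using cx by simp
  qed
qed

abbreviation "U \<equiv> S1 \<union> S2 \<union> S3"

lemma CC:
  assumes "x \<in> U" "y \<in> U" "\<not> compat EG x y"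
  shows "col x = col y \<and> col x \<noteq> None"
proof (cases "x \<in> S2")
  case True
  then have "y \<notin> S2" using assms cl2' by blast
  then have "y \<in> S1 \<union> S3" using assms by blast
  moreover have "\<not> compat EG y x" using assms(3) Dsym by blast
  ultimately have "col y = col x \<and> col y \<noteq> None" using CC0[of y x] True by blast
  then show ?thesis by metis
next
  case False
  then have xx: "x \<in> S1 \<union> S3" using assms by blast
  show ?thesis
  proof (cases "y \<in> S2")
    case True then show ?thesis using CC0[of x y] xx assms(3) by blast
  next
    case False
    then have "y \<in> S1 \<union> S3" using assms by blast
    then have "compat EG x y" using xx cl1' cl3' c13 c31 by blast
    then show ?thesis using assms by blast
  qed
qed

lemma col_compat: "x \<in> U \<Longrightarrow> y \<in> U \<Longrightarrow> col x \<noteq> col y \<Longrightarrow> compat EG x y"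
  using CC by blast

lemma col_None_compat: "x \<in> U \<Longrightarrow> y \<in> U \<Longrightarrow> col x = None \<Longrightarrow> compat EG x y"
  using CC by blast

lemma col_T: "col x = Some (Inl True) \<Longrightarrow> x \<notin> S3"
proof
  assume c: "col x = Some (Inl True)" and x3: "x \<in> S3"
  then have "x \<notin> Zs" by (auto simp: col_def split: if_splits)
  then have "(x \<in> S1 - S3 \<and> (\<exists>t\<in>S2. \<not> compat EG x t)) \<or> (x \<in> S2 \<and> (\<exists>p\<in>S1 - S3. \<not> compat EG p x))"
    using c by (auto simp: col_def split: if_splits)
  then obtain p where "p \<in> S1" "\<not> compat EG p x" using x3 by blast
  then show False using c13 x3 by blast
qed

lemma col_F: "col x = Some (Inl False) \<Longrightarrow> x \<notin> S1"
proof
  assume c: "col x = Some (Inl False)" and x1: "x \<in> S1"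
  then have "x \<notin> Zs" by (auto simp: col_def split: if_splits)
  then have "(x \<in> S3 - S1 \<and> (\<exists>t\<in>S2. \<not> compat EG t x)) \<or> (x \<in> S2 \<and> (\<exists>r\<in>S3 - S1. \<not> compat EG x r))"
    using c by (auto simp: col_def split: if_splits)
  then obtain r where "r \<in> S3" "\<not> compat EG x r" using x1 by blast
  then show False using c13 x1 by blast
qed

lemma col_Z: "col x = Some (Inr z) \<Longrightarrow> x \<in> S1 \<union> S3 \<Longrightarrow> x = z"
proof -
  assume c: "col x = Some (Inr z)" and x: "x \<in> S1 \<union> S3"
  show "x = z"
  proof (cases "x \<in> Zs")
    case True then show ?thesis using c by (simp add: col_def)
  next
    case False
    then have "x \<in> S2 \<and> (\<exists>z\<in>Zs. \<not> compat EG z x)" using c by (auto simp: col_def split: if_splits)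
    then obtain z' where "z' \<in> Zs" "\<not> compat EG z' x" by blast
    then have "z' \<in> S1" "z' \<in> S3" by (auto simp: Zs_def)
    then have "compat EG z' x" using x \<open>\<not> compat EG z' x\<close> cl1' c13 by blast
    then show ?thesis using \<open>\<not> compat EG z' x\<close> by blast
  qed
qed

lemma zof_in: "x \<in> S2 \<and> (\<exists>z\<in>Zs. \<not> compat EG z x) \<Longrightarrow> zof x \<in> Zs"
  using zof by blast

lemma col_range: "col x = None \<or> col x = Some (Inl True) \<or> col x = Some (Inl False) \<or> (\<exists>z\<in>Zs. col x = Some (Inr z))"
  unfolding col_def using zof_in[of x] by auto

end


fun Qw :: "('c \<Rightarrow> 'v word) \<Rightarrow> 'v \<Rightarrow> 'c list \<Rightarrow> 'v word" where
  "Qw cw x [] = []"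
| "Qw cw x [c] = cw c"
| "Qw cw x (c # d # cs) = comm (cw c) ((x, False) # Qw cw x (d # cs) @ [(x, True)])"

lemma letters_Qw: "letters (Qw cw x cs) \<subseteq> (\<Union>c\<in>set cs. letters (cw c)) \<union> {x}"
  by (induction cw x cs rule: Qw.induct) (auto simp: letters_comm)

lemma Qw_kill:
  assumes "c \<in> set cs" "raag_eq E (hom_ext f (cw c)) []"
  shows "raag_eq E (hom_ext f (Qw cw x cs)) []"
  using assms
proof (induction cw x cs rule: Qw.induct)
  case (1 cw x) then show ?case by simp
next
  case (2 cw x c') then show ?case by simp
next
  case (3 cw x c' d cs)
  let ?B = "(x, False) # Qw cw x (d # cs) @ [(x, True)]"
  have hQ: "hom_ext f (Qw cw x (c' # d # cs)) = comm (hom_ext f (cw c')) (hom_ext f ?B)"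
    by (simp add: hom_ext_comm)
  have hB: "hom_ext f ?B = f x @ hom_ext f (Qw cw x (d # cs)) @ inv_word (f x)" by (simp add: hl_def)
  show ?case
  proof (cases "c = c'")
    case True
    then have "raag_eq E (hom_ext f (cw c')) []" using "3.prems" by simp
    then show ?thesis unfolding hQ by (rule comm_Nil_left)
  next
    case False
    then have "c \<in> set (d # cs)" using "3.prems" by simp
    then have q: "raag_eq E (hom_ext f (Qw cw x (d # cs))) []" using "3.IH" "3.prems" by blast
    have "raag_eq E (f x @ hom_ext f (Qw cw x (d # cs)) @ inv_word (f x)) (f x @ [] @ inv_word (f x))"
      by (rule raag_eq_ctx[OF q])
    also have "f x @ [] @ inv_word (f x) = f x @ inv_word (f x)" by simp
    also have "raag_eq E \<dots> []" by (rule raag_eq_cancel_inv)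
    finally have "raag_eq E (hom_ext f ?B) []" unfolding hB .
    then show ?thesis unfolding hQ by (rule comm_Nil_right)
  qed
qed

lemma red_inv_eq: "red a = red a' \<Longrightarrow> red (inv_word a) = red (inv_word a')"
  using red_inv_cong by metis

lemma red_comm_cong:
  assumes "red a = red a'" "red b = red b'"
  shows "red (comm a b) = red (comm a' b')"
proof -
  have "red (comm a b) = red ([] @ a @ (b @ inv_word a @ inv_word b))" by (simp add: comm_def)
  also have "\<dots> = red ([] @ a' @ (b @ inv_word a @ inv_word b))" by (rule red_cong[OF assms(1)])
  also have "\<dots> = red (a' @ b @ (inv_word a @ inv_word b))" by simp
  also have "\<dots> = red (a' @ b' @ (inv_word a @ inv_word b))" by (rule red_cong[OF assms(2)])
  also have "\<dots> = red ((a' @ b') @ inv_word a @ inv_word b)" by simp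
  also have "\<dots> = red ((a' @ b') @ inv_word a' @ inv_word b)" by (rule red_cong[OF red_inv_eq[OF assms(1)]])
  also have "\<dots> = red ((a' @ b' @ inv_word a') @ inv_word b @ [])" by simp
  also have "\<dots> = red ((a' @ b' @ inv_word a') @ inv_word b' @ [])" by (rule red_cong[OF red_inv_eq[OF assms(2)]])
  finally show ?thesis by (simp add: comm_def)
qed

lemma inv_word_rev: "inv_word w = rev (map invl w)"
  by (induction w) auto

lemma hd_inv_word: "w \<noteq> [] \<Longrightarrow> hd (inv_word w) = invl (last w)"
  by (simp add: inv_word_rev hd_rev last_map)

lemma last_inv_word: "w \<noteq> [] \<Longrightarrow> last (inv_word w) = invl (hd w)"
  by (simp add: inv_word_rev last_rev hd_map)

lemma invl_inj: "invl a = invl b \<longleftrightarrow> a = b"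
  by (metis invl_invl)

lemma hd_last_powl: "k \<noteq> 0 \<Longrightarrow> powl g k \<noteq> [] \<and> fst (hd (powl g k)) = g \<and> fst (last (powl g k)) = g"
  by (simp add: powl_def)



lemma red_cons_lemma: "reduced b \<Longrightarrow> b \<noteq> [] \<Longrightarrow> hd b \<noteq> invl g \<Longrightarrow> reduced (g # b)"
proof (cases b)
  case (Cons h t)
  assume "reduced b" "hd b \<noteq> invl g"
  then show ?thesis using Cons by (simp add: invl_def; metis invl_def invl_invl)
qed simp

lemma red_app_lemma: "reduced a \<Longrightarrow> reduced b \<Longrightarrow> hd b \<noteq> invl (last a) \<Longrightarrow> reduced (a @ b)"
  by (simp add: reduced_append)


lemma reduced_W0:
  assumes R: "reduced R" "R \<noteq> []" "fst (hd R) = True" "last R \<noteq> (False, False)" and m: "(m::int) \<noteq> 0"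
  shows "reduced (powl True m @ (False, False) # R @ (False, True) # powl True (- m) @ (False, False) # inv_word R @ [(False, True)])"
proof -
  have p1: "powl True m \<noteq> []" "fst (hd (powl True m)) = True" "fst (last (powl True m)) = True"
    using hd_last_powl[OF m, of True] by blast+
  have m': "- m \<noteq> 0" using m by simp
  have p2: "powl True (- m) \<noteq> []" "fst (hd (powl True (- m))) = True" "fst (last (powl True (- m))) = True"
    using hd_last_powl[OF m', of True] by blast+
  have iR1: "reduced (inv_word R)" using reduced_inv_word[OF R(1)] .
  have iR2: "inv_word R \<noteq> []" by (metis R(2) length_0_conv length_inv_word)
  note iR = iR1 iR2
  have hiR: "hd (inv_word R) = invl (last R)" using hd_inv_word R by blast
  have liR: "fst (last (inv_word R)) = True" using last_inv_word[OF R(2)] R(3) by (simp add: invl_def)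
  have s1: "reduced (inv_word R @ [(False, True)])"
  proof (rule red_app_lemma[OF iR(1)])
    show "reduced [(False, True)]" by simp
    show "hd [(False, True)] \<noteq> invl (last (inv_word R))" using liR by (auto simp: invl_def)
  qed
  have s2: "reduced ((False, False) # inv_word R @ [(False, True)])"
  proof (rule red_cons_lemma[OF s1])
    show "inv_word R @ [(False, True)] \<noteq> []" by simp
    have "hd (inv_word R @ [(False, True)]) = invl (last R)" using hiR iR(2) by simp
    then show "hd (inv_word R @ [(False, True)]) \<noteq> invl (False, False)" using R(4) invl_inj by metis
  qed
  have s3: "reduced (powl True (- m) @ (False, False) # inv_word R @ [(False, True)])"
  proof (rule red_app_lemma[OF reduced_powl s2])
    show "hd ((False, False) # inv_word R @ [(False, True)]) \<noteq> invl (last (powl True (- m)))"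
      using p2 by (auto simp: invl_def)
  qed
  have s4: "reduced ((False, True) # powl True (- m) @ (False, False) # inv_word R @ [(False, True)])"
  proof (rule red_cons_lemma[OF s3])
    show "powl True (- m) @ (False, False) # inv_word R @ [(False, True)] \<noteq> []" by simp
    have "hd (powl True (- m) @ (False, False) # inv_word R @ [(False, True)]) = hd (powl True (- m))"
      using p2(1) by simp
    then show "hd (powl True (- m) @ (False, False) # inv_word R @ [(False, True)]) \<noteq> invl (False, True)"
      using p2(2) by (auto simp: invl_def)
  qed
  have s5: "reduced (R @ (False, True) # powl True (- m) @ (False, False) # inv_word R @ [(False, True)])"
  proof (rule red_app_lemma[OF R(1) s4])
    show "hd ((False, True) # powl True (- m) @ (False, False) # inv_word R @ [(False, True)]) \<noteq> invl (last R)"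
    proof
      assume "hd ((False, True) # powl True (- m) @ (False, False) # inv_word R @ [(False, True)]) = invl (last R)"
      then have "(False, True) = invl (last R)" by simp
      then have "invl (False, True) = last R" by (metis invl_invl)
      then show False using R(4) by (simp add: invl_def)
    qed
  qed
  have s6: "reduced ((False, False) # R @ (False, True) # powl True (- m) @ (False, False) # inv_word R @ [(False, True)])"
  proof (rule red_cons_lemma[OF s5])
    show "R @ (False, True) # powl True (- m) @ (False, False) # inv_word R @ [(False, True)] \<noteq> []" by simp
    have "hd (R @ (False, True) # powl True (- m) @ (False, False) # inv_word R @ [(False, True)]) = hd R"
      using R(2) by simp
    then show "hd (R @ (False, True) # powl True (- m) @ (False, False) # inv_word R @ [(False, True)]) \<noteq> invl (False, False)"
      using R(3) by (auto simp: invl_def)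
  qed
  show ?thesis
  proof (rule red_app_lemma[OF reduced_powl s6])
    show "hd ((False, False) # R @ (False, True) # powl True (- m) @ (False, False) # inv_word R @ [(False, True)]) \<noteq> invl (last (powl True m))"
      using p1 by (auto simp: invl_def)
  qed
qed


lemma Qw_red:
  assumes "cs \<noteq> []" "\<forall>c\<in>set cs. red (hom_ext \<sigma> (cw c)) = powl True (mc c) \<and> mc c \<noteq> 0"
    and sx: "\<sigma> x = [(False, False)]"
  shows "red (hom_ext \<sigma> (Qw cw x cs)) \<noteq> [] \<and> fst (hd (red (hom_ext \<sigma> (Qw cw x cs)))) = True
         \<and> last (red (hom_ext \<sigma> (Qw cw x cs))) \<noteq> (False, False)"
  using assms(1,2) sx
proof (induction cw x cs rule: Qw.induct)
  case (1 cw x) then show ?case by simp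
next
  case (2 cw x c)
  then have r: "red (hom_ext \<sigma> (Qw cw x [c])) = powl True (mc c)" "mc c \<noteq> 0" by auto
  have hp: "powl True (mc c) \<noteq> []" "fst (hd (powl True (mc c))) = True" "fst (last (powl True (mc c))) = True"
    using hd_last_powl[OF r(2), of True] by blast+
  then have "last (powl True (mc c)) \<noteq> (False, False)" by (metis fst_conv)
  then show ?case unfolding r(1) using hp by blast
next
  case (3 cw x c d cs)
  define R where "R = red (hom_ext \<sigma> (Qw cw x (d # cs)))"
  have IH: "R \<noteq> [] \<and> fst (hd R) = True \<and> last R \<noteq> (False, False)" unfolding R_def
    by (rule "3.IH") (use "3.prems" in auto)
  have rc: "red (hom_ext \<sigma> (cw c)) = powl True (mc c)" "mc c \<noteq> 0" using "3.prems" by auto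
  let ?B = "(x, False) # Qw cw x (d # cs) @ [(x, True)]"
  have hB: "hom_ext \<sigma> ?B = [(False, False)] @ hom_ext \<sigma> (Qw cw x (d # cs)) @ [(False, True)]"
    using "3.prems"(3) by (simp add: hl_def invl_def)
  have eB: "red (hom_ext \<sigma> ?B) = red ([(False, False)] @ R @ [(False, True)])"
    unfolding hB R_def by (rule red_cong2)
  have eA: "red (hom_ext \<sigma> (cw c)) = red (powl True (mc c))"
    by (simp only: rc(1) red_reduced[OF reduced_powl])
  have "red (hom_ext \<sigma> (Qw cw x (c # d # cs))) = red (comm (hom_ext \<sigma> (cw c)) (hom_ext \<sigma> ?B))"
    by (simp add: hom_ext_comm)
  also have "\<dots> = red (comm (powl True (mc c)) ([(False, False)] @ R @ [(False, True)]))"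
    by (rule red_comm_cong[OF eA eB])
  also have "comm (powl True (mc c)) ([(False, False)] @ R @ [(False, True)]) =
     powl True (mc c) @ (False, False) # R @ (False, True) # powl True (- mc c) @ (False, False) # inv_word R @ [(False, True)]"
    by (simp add: comm_def inv_word_powl invl_def)
  also have "red \<dots> = powl True (mc c) @ (False, False) # R @ (False, True) # powl True (- mc c) @ (False, False) # inv_word R @ [(False, True)]"
  proof (rule red_reduced, rule reduced_W0)
    show "reduced R" unfolding R_def by (rule reduced_red)
  qed (use IH rc in auto)
  finally have fin: "red (hom_ext \<sigma> (Qw cw x (c # d # cs))) = powl True (mc c) @ (False, False) # R @ (False, True) # powl True (- mc c) @ (False, False) # inv_word R @ [(False, True)]" .
  have hp: "powl True (mc c) \<noteq> []" "fst (hd (powl True (mc c))) = True" using hd_last_powl[OF rc(2), of True] by blast+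
  show ?case unfolding fin using hp by simp
qed


context setting
begin

lemma n3_case:
  assumes i: "i < m" and n3: "n i = 3"
  shows "\<exists>s\<in>S (i, 1). \<exists>t\<in>S (i, 2). \<exists>r\<in>S (i, 3). \<not> compat EG s t \<and> \<not> compat EG t r \<and> s \<noteq> r"
proof (rule ccontr)
  assume neg: "\<not> ?thesis"
  define v1 where "v1 = (i, 1::nat)"
  define v2 where "v2 = (i, 2::nat)"
  define v3 where "v3 = (i, 3::nat)"
  have vL: "v1 \<in> VL" "v2 \<in> VL" "v3 \<in> VL" using i n3 by (auto simp: join_pc_V_def v1_def v2_def v3_def)
  have E13: "EL v1 v3" using vL by (auto simp: join_pc_E_def v1_def v3_def)
  have nE: "\<not> EL v1 v2" "\<not> EL v2 v1" "\<not> EL v2 v3" "\<not> EL v3 v2" by (auto simp: join_pc_E_def v1_def v2_def v3_def)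
  have vd: "v1 \<noteq> v2" "v1 \<noteq> v3" "v2 \<noteq> v3" by (auto simp: v1_def v2_def v3_def)
  have Hn: "\<And>s t r. s \<in> S v1 \<Longrightarrow> t \<in> S v2 \<Longrightarrow> r \<in> S v3 \<Longrightarrow> \<not> compat EG s t \<Longrightarrow> \<not> compat EG t r \<Longrightarrow> s = r"
    using neg unfolding v1_def v2_def v3_def by blast
  interpret T: tri EG "S v1" "S v2" "S v3"
  proof
    show "\<And>x y. EG x y \<Longrightarrow> EG y x" by (rule EG_sym)
    show "clique EG (S v1)" by (rule S_clique[OF vL(1)])
    show "clique EG (S v2)" by (rule S_clique[OF vL(2)])
    show "clique EG (S v3)" by (rule S_clique[OF vL(3)])
    show "\<And>x y. x \<in> S v1 \<Longrightarrow> y \<in> S v3 \<Longrightarrow> compat EG x y" using adj_compat[OF vL(1) vL(3) E13] by blast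
    show "\<And>s t r. s \<in> S v1 \<Longrightarrow> t \<in> S v2 \<Longrightarrow> r \<in> S v3 \<Longrightarrow> \<not> compat EG s t \<Longrightarrow> \<not> compat EG t r \<Longrightarrow> s = r"
      by (rule Hn)
    show "finite (S v1)" by (rule S_fin)
  qed
  obtain zs where zs: "distinct zs" "set zs = T.Zs" using finite_distinct_list[OF T.Zs_fin] by blast
  define ncs :: "(bool + 'b) option list" where "ncs = [Some (Inl True), Some (Inl False)] @ map (\<lambda>z. Some (Inr z)) zs"
  define cw :: "(bool + 'b) option \<Rightarrow> (nat \<times> nat) word" where
    "cw c = (case c of Some (Inl b) \<Rightarrow> (if b then powl v3 1 else powl v1 1)
      | Some (Inr z) \<Rightarrow> powl v1 (e v3 z) @ powl v3 (- e v1 z) | None \<Rightarrow> [])" for c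
  define Q where "Q = Qw cw v2 ncs"
  have lcw: "letters (cw c) \<subseteq> {v1, v3}" for c
    using letters_powl[of v1] letters_powl[of v3] by (auto simp: cw_def split: option.splits sum.splits)
  have lQ: "letters Q \<subseteq> {v1, v2, v3}" using letters_Qw[of cw v2 ncs] lcw unfolding Q_def by blast
  have QVL: "letters Q \<subseteq> VL" using lQ vL by blast
  have G: "raag_eq EG (hom_ext P Q) []"
  proof -
    define w where "w = hom_ext P Q"
    have lw: "letters w \<subseteq> S v1 \<union> S v2 \<union> S v3"
    proof -
      have "letters w \<subseteq> (\<Union>v\<in>letters Q. letters (P v))" unfolding w_def by (rule letters_hom_ext)
      also have "\<dots> \<subseteq> S v1 \<union> S v2 \<union> S v3" using lQ letters_P by blast
      finally show ?thesis .
    qed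
    define cs where "cs = None # ncs"
    have dcs: "distinct cs" using zs(1) by (auto simp: cs_def ncs_def distinct_map inj_on_def)
    have ccs: "\<forall>x\<in>letters w. T.col x \<in> set cs"
    proof
      fix x assume "x \<in> letters w"
      show "T.col x \<in> set cs" using T.col_range[of x] zs(2) by (auto simp: cs_def ncs_def)
    qed
    have cross: "\<forall>x\<in>letters w. \<forall>y\<in>letters w. T.col x \<noteq> T.col y \<longrightarrow> compat EG x y"
      using T.col_compat lw by blast
    have dec: "raag_eq EG w (concat (map (\<lambda>c. proj {x. T.col x = c} w) cs))"
      by (rule raag_eq_decomp[OF dcs ccs cross EG_sym])
    have each: "\<forall>c\<in>set cs. raag_eq EG (proj {x. T.col x = c} w) []"
    proof
      fix c assume c: "c \<in> set cs"
      define W where "W = {x. T.col x = c}"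
      define f where "f = (\<lambda>v. proj W (P v))"
      have pw: "proj W w = hom_ext f Q" unfolding w_def f_def by (rule proj_hom_ext)
      have lf: "letters (hom_ext f u) \<subseteq> W \<inter> (S v1 \<union> S v2 \<union> S v3)" if "letters u \<subseteq> {v1, v2, v3}" for u
      proof -
        have "letters (hom_ext f u) \<subseteq> (\<Union>v\<in>letters u. letters (f v))" by (rule letters_hom_ext)
        also have "\<dots> \<subseteq> W \<inter> (S v1 \<union> S v2 \<union> S v3)"
        proof (rule UN_least)
          fix v assume "v \<in> letters u"
          then have "v = v1 \<or> v = v2 \<or> v = v3" using that by blast
          then have "letters (P v) \<subseteq> S v1 \<union> S v2 \<union> S v3" using letters_P[of v] by blast
          then show "letters (f v) \<subseteq> W \<inter> (S v1 \<union> S v2 \<union> S v3)" by (auto simp: f_def letters_proj)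
        qed
        finally show ?thesis .
      qed
      show "raag_eq EG (proj {x. T.col x = c} w) []"
      proof (cases "c = None")
        case True
        define B where "B = (v2, False) # Qw cw v2 (Some (Inl False) # map (\<lambda>z. Some (Inr z)) zs) @ [(v2, True)]"
        have Qc: "Q = comm (cw (Some (Inl True))) B"
          by (simp add: Q_def ncs_def B_def)
        have l1: "letters (cw (Some (Inl True))) \<subseteq> {v1, v2, v3}" using lcw by blast
        have l2: "letters B \<subseteq> {v1, v2, v3}"
          using letters_Qw[of cw v2 "Some (Inl False) # map (\<lambda>z. Some (Inr z)) zs"] lcw by (auto simp: B_def)
        have "raag_eq EG (comm (hom_ext f (cw (Some (Inl True)))) (hom_ext f B)) []"
        proof (rule comm_commuting, intro ballI)
          fix x y assume x: "x \<in> letters (hom_ext f (cw (Some (Inl True))))" and y: "y \<in> letters (hom_ext f B)"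
          have "x \<in> W \<inter> (S v1 \<union> S v2 \<union> S v3)" using lf[OF l1] x by blast
          moreover have "y \<in> W \<inter> (S v1 \<union> S v2 \<union> S v3)" using lf[OF l2] y by blast
          ultimately show "compat EG x y" using T.col_None_compat True unfolding W_def by blast
        qed
        then show ?thesis unfolding W_def[symmetric] pw Qc hom_ext_comm .
      next
        case False
        then have cn: "c \<in> set ncs" using c unfolding cs_def by auto
        have ep: "expw (hom_ext P (powl v k)) y = k * e v y" for v k y
          by (simp add: expw_hom_ext_powl expw_P)
        have kill: "raag_eq EG (hom_ext f (cw c)) []"
        proof (rule clique_eq_Nil[of EG "S v1 \<union> S v3"])
          show "clique EG (S v1 \<union> S v3)" using T.cl1' T.cl3' T.c13 T.c31 unfolding clique_def by blast
          show "finite (S v1 \<union> S v3)" using S_fin by simp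
          show "letters (hom_ext f (cw c)) \<subseteq> S v1 \<union> S v3"
          proof -
            have "letters (hom_ext f (cw c)) \<subseteq> (\<Union>v\<in>letters (cw c). letters (f v))" by (rule letters_hom_ext)
            also have "\<dots> \<subseteq> S v1 \<union> S v3"
            proof (rule UN_least)
              fix v assume "v \<in> letters (cw c)"
              then have "v = v1 \<or> v = v3" using lcw[of c] by blast
              then have "letters (P v) \<subseteq> S v1 \<union> S v3" using letters_P[of v] by blast
              then show "letters (f v) \<subseteq> S v1 \<union> S v3" by (auto simp: f_def letters_proj)
            qed
            finally show ?thesis .
          qed
        next
          fix x
          have "expw (hom_ext f (cw c)) x = expw (proj W (hom_ext P (cw c))) x" by (simp add: f_def proj_hom_ext)
          also have "\<dots> = (if x \<in> W then expw (hom_ext P (cw c)) x else 0)" by (rule expw_proj)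
          also have "\<dots> = 0"
          proof (cases "x \<in> W")
            case False then show ?thesis by simp
          next
            case True
            then have cx: "T.col x = c" by (simp add: W_def)
            from cn consider "c = Some (Inl True)" | "c = Some (Inl False)" | z where "z \<in> set zs" "c = Some (Inr z)"
              by (auto simp: ncs_def)
            then show ?thesis
            proof cases
              case 1
              then have "x \<notin> S v3" using T.col_T cx by blast
              then have "e v3 x = 0" by (simp add: S_def)
              then show ?thesis using True 1 by (simp add: cw_def ep)
            next
              case 2
              then have "x \<notin> S v1" using T.col_F cx by blast
              then have "e v1 x = 0" by (simp add: S_def)
              then show ?thesis using True 2 by (simp add: cw_def ep)
            next
              case (3 z)
              have "expw (hom_ext P (cw c)) x = e v3 z * e v1 x + (- e v1 z) * e v3 x"
                using 3 by (simp add: cw_def ep)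
              also have "\<dots> = 0"
              proof (cases "x \<in> S v1 \<union> S v3")
                case True
                then have "x = z" using T.col_Z cx 3 by blast
                then show ?thesis by simp
              next
                case False
                then have "e v1 x = 0" "e v3 x = 0" by (auto simp: S_def)
                then show ?thesis by simp
              qed
              finally show ?thesis using True by simp
            qed
          qed
          finally show "expw (hom_ext f (cw c)) x = 0" .
        qed
        have "raag_eq EG (hom_ext f Q) []" unfolding Q_def by (rule Qw_kill[of c ncs EG f cw, OF cn kill])
        then show ?thesis unfolding W_def[symmetric] pw .
      qed
    qed
    have "raag_eq EG (concat (map (\<lambda>c. proj {x. T.col x = c} w) cs)) []"
      by (rule raag_eq_concat_Nil[OF each])
    then have "raag_eq EG w []" by (rule raag_eq_trans[OF dec])
    then show ?thesis unfolding w_def .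
  qed
  define M where "M = 1 + (\<Sum>z\<in>T.Zs. \<bar>e v3 z\<bar>)"
  define \<sigma> where "\<sigma> = (\<lambda>v. if v = v1 then powl True 1 else if v = v3 then powl True M
      else if v = v2 then [(False, False)] else ([] :: (bool \<times> bool) list))"
  define mc where "mc c = (case c of Some (Inl b) \<Rightarrow> (if b then M else 1)
      | Some (Inr z) \<Rightarrow> e v3 z - e v1 z * M | None \<Rightarrow> 0)" for c
  have s1: "\<sigma> v1 = powl True 1" "\<sigma> v3 = powl True M" "\<sigma> v2 = [(False, False)]" using vd by (auto simp: \<sigma>_def)
  have Mpos: "M \<ge> 1" by (simp add: M_def sum_nonneg)
  have rcw: "\<forall>c\<in>set ncs. red (hom_ext \<sigma> (cw c)) = powl True (mc c) \<and> mc c \<noteq> 0"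
  proof
    fix c assume cn: "c \<in> set ncs"
    from cn consider "c = Some (Inl True)" | "c = Some (Inl False)" | z where "z \<in> set zs" "c = Some (Inr z)"
      by (auto simp: ncs_def)
    then show "red (hom_ext \<sigma> (cw c)) = powl True (mc c) \<and> mc c \<noteq> 0"
    proof cases
      case 1
      have "hom_ext \<sigma> (cw c) = powl True (1 * M)" using 1 by (simp add: cw_def hom_ext_powl_const[of \<sigma> v3 True M, OF s1(2)])
      then show ?thesis using 1 Mpos by (simp add: mc_def red_reduced[OF reduced_powl])
    next
      case 2
      have "hom_ext \<sigma> (cw c) = powl True (1 * 1)" using 2 by (simp add: cw_def hom_ext_powl_const[of \<sigma> v1 True 1, OF s1(1)])
      then show ?thesis using 2 by (simp add: mc_def red_reduced[OF reduced_powl])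
    next
      case (3 z)
      have "hom_ext \<sigma> (cw c) = powl True (e v3 z * 1) @ powl True (- e v1 z * M)"
        using 3 by (simp add: cw_def hom_ext_powl_const[of \<sigma> v1 True 1, OF s1(1)] hom_ext_powl_const[of \<sigma> v3 True M, OF s1(2)])
      then have "red (hom_ext \<sigma> (cw c)) = powl True (e v3 z * 1 + - e v1 z * M)" by (simp only: red_powl_powl)
      moreover have "e v3 z * 1 + - e v1 z * M = mc c" using 3 by (simp add: mc_def)
      moreover have "mc c \<noteq> 0"
      proof -
        have zZ: "z \<in> T.Zs" using 3 zs by simp
        then have "e v1 z \<noteq> 0" using T.Zs_sub by (auto simp: S_def)
        then have "\<bar>e v1 z\<bar> \<ge> 1" by simp
        then have "\<bar>e v1 z\<bar> * M \<ge> 1 * M" using Mpos by (intro mult_right_mono) auto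
        moreover have "\<bar>e v3 z\<bar> \<le> (\<Sum>z\<in>T.Zs. \<bar>e v3 z\<bar>)"
          by (rule member_le_sum) (use zZ T.Zs_fin in auto)
        ultimately have "\<bar>e v3 z\<bar> < \<bar>e v1 z * M\<bar>" using Mpos by (simp add: M_def abs_mult)
        then show ?thesis using 3 by (auto simp: mc_def)
      qed
      ultimately show ?thesis by simp
    qed
  qed
  have F: "red (hl \<sigma> (u, a) @ hl \<sigma> (u', b)) = red (hl \<sigma> (u', b) @ hl \<sigma> (u, a))" if E: "EL u u'" for u u' a b
  proof (cases "\<sigma> u = [] \<or> \<sigma> u' = []")
    case True then show ?thesis by (auto simp: hl_def)
  next
    case False
    then have uu: "u \<in> {v1, v2, v3}" "u' \<in> {v1, v2, v3}" by (auto simp: \<sigma>_def split: if_splits)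
    moreover have "u \<noteq> u'" using E by (auto simp: join_pc_E_def)
    ultimately have "(u = v1 \<and> u' = v3) \<or> (u = v3 \<and> u' = v1)" using E nE by auto
    moreover have "hl \<sigma> (v1, d) = powl True (if d then -1 else 1)" for d
      using s1(1) by (simp add: hl_def inv_word_powl)
    moreover have "hl \<sigma> (v3, d) = powl True (if d then -M else M)" for d
      using s1(2) by (simp add: hl_def inv_word_powl)
    ultimately obtain c1 c2 where "hl \<sigma> (u, a) = powl True c1" "hl \<sigma> (u', b) = powl True c2"
      by blast
    then show ?thesis by (simp add: red_powl_powl add.commute)
  qed
  have L: "\<not> raag_eq EL Q []"
  proof
    assume "raag_eq EL Q []"
    then have "red (hom_ext \<sigma> Q) = red (hom_ext \<sigma> [])" by (rule red_hom_ext_inv[rotated]) (rule F)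
    moreover have "red (hom_ext \<sigma> Q) \<noteq> []"
      using Qw_red[of ncs \<sigma> cw mc v2] rcw s1(3) unfolding Q_def ncs_def by auto
    ultimately show False by (simp add: red_def)
  qed
  have "raag_eq EL Q []" using inj_P[OF QVL, of "[]"] G by simp
  then show False using L by blast
qed

end


context setting
begin

lemma walk:
  assumes i: "i < m" and k: "k + 1 \<le> n i" and t: "t \<in> A i k"
  shows "\<exists>y. y (k + 1) = t \<and> (\<forall>j. 1 \<le> j \<and> j \<le> k + 1 \<longrightarrow> y j \<in> S (i, j))
             \<and> (\<forall>j. 1 \<le> j \<and> j \<le> k \<longrightarrow> \<not> compat EG (y j) (y (Suc j)))"
  using k t
proof (induction k arbitrary: t)
  case 0
  then show ?case by (intro exI[of _ "\<lambda>_. t"]) (auto simp: A_simps)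
next
  case (Suc k)
  then have tS: "t \<in> S (i, k + 2)" and "\<exists>s\<in>A i k. \<not> compat EG s t" by (auto simp: A_simps)
  then obtain s where s: "s \<in> A i k" "\<not> compat EG s t" by blast
  obtain y where y: "y (k + 1) = s" "\<forall>j. 1 \<le> j \<and> j \<le> k + 1 \<longrightarrow> y j \<in> S (i, j)"
    "\<forall>j. 1 \<le> j \<and> j \<le> k \<longrightarrow> \<not> compat EG (y j) (y (Suc j))"
    using Suc.IH[OF _ s(1)] Suc.prems by auto
  define y' where "y' = y(k + 2 := t)"
  have "y' (Suc k + 1) = t" by (simp add: y'_def)
  moreover have "\<forall>j. 1 \<le> j \<and> j \<le> Suc k + 1 \<longrightarrow> y' j \<in> S (i, j)"
  proof (intro allI impI)
    fix j assume "1 \<le> j \<and> j \<le> Suc k + 1"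
    then show "y' j \<in> S (i, j)" using y(2) tS by (cases "j = k + 2") (auto simp: y'_def)
  qed
  moreover have "\<forall>j. 1 \<le> j \<and> j \<le> Suc k \<longrightarrow> \<not> compat EG (y' j) (y' (Suc j))"
  proof (intro allI impI)
    fix j assume j: "1 \<le> j \<and> j \<le> Suc k"
    show "\<not> compat EG (y' j) (y' (Suc j))"
    proof (cases "j = Suc k")
      case True then show ?thesis using s y(1) by (simp add: y'_def)
    next
      case False
      then have "j \<le> k" using j by simp
      then show ?thesis using y(3) j by (simp add: y'_def)
    qed
  qed
  ultimately show ?case by blast
qed

definition pathprop :: "nat \<Rightarrow> (nat \<Rightarrow> 'b) \<Rightarrow> bool" where
  "pathprop i y \<longleftrightarrow> (\<forall>j. 1 \<le> j \<and> j \<le> n i \<longrightarrow> y j \<in> S (i, j))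
     \<and> (\<forall>j. 1 \<le> j \<and> j < n i \<longrightarrow> \<not> compat EG (y j) (y (Suc j)))
     \<and> (\<forall>j k. 1 \<le> j \<and> k \<le> n i \<and> j + 2 \<le> k \<longrightarrow> y j \<noteq> y k)"

lemma path_exists:
  assumes i: "i < m" and n2: "n i \<ge> 2"
  shows "\<exists>y. pathprop i y"
proof (cases "n i = 3")
  case True
  obtain s t r where str: "s \<in> S (i, 1)" "t \<in> S (i, 2)" "r \<in> S (i, 3)"
    "\<not> compat EG s t" "\<not> compat EG t r" "s \<noteq> r"
    using n3_case[OF i True] by blast
  define y where "y = (\<lambda>j::nat. if j = 1 then s else if j = 2 then t else r)"
  have "pathprop i y"
    unfolding pathprop_def
  proof (intro conjI allI impI)
    fix j assume "1 \<le> j \<and> j \<le> n i"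
    then have "j = 1 \<or> j = 2 \<or> j = 3" using True by auto
    then show "y j \<in> S (i, j)" using str by (auto simp: y_def)
  next
    fix j assume "1 \<le> j \<and> j < n i"
    then have "j = 1 \<or> j = 2" using True by auto
    then show "\<not> compat EG (y j) (y (Suc j))" using str by (auto simp: y_def)
  next
    fix j k assume "1 \<le> j \<and> k \<le> n i \<and> j + 2 \<le> k"
    then have "j = 1" "k = 3" using True by auto
    then show "y j \<noteq> y k" using str by (auto simp: y_def)
  qed
  then show ?thesis by blast
next
  case False
  obtain k where k: "n i = Suc (Suc k)" using n2 by (metis add_2_eq_Suc le_Suc_ex)
  have "A i (Suc k) \<noteq> {}" by (rule cut_nonempty[OF i]) (use k in simp)
  then obtain t where t: "t \<in> A i (Suc k)" by blast
  obtain y where y: "y (Suc k + 1) = t" "\<forall>j. 1 \<le> j \<and> j \<le> Suc k + 1 \<longrightarrow> y j \<in> S (i, j)"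
    "\<forall>j. 1 \<le> j \<and> j \<le> Suc k \<longrightarrow> \<not> compat EG (y j) (y (Suc j))"
    using walk[OF i _ t] k by auto
  have yS: "\<forall>j. 1 \<le> j \<and> j \<le> n i \<longrightarrow> y j \<in> S (i, j)" using y(2) k by simp
  have yD: "\<forall>j. 1 \<le> j \<and> j < n i \<longrightarrow> \<not> compat EG (y j) (y (Suc j))" using y(3) k by auto
  have far: "compat EG a b" if "a \<in> S (i, j)" "b \<in> S (i, l)" "1 \<le> j" "l \<le> n i" "j + 2 \<le> l" for a b j l
    by (rule adj_compat[OF _ _ EL_far[OF i]]) (use that i in \<open>auto simp: join_pc_V_def\<close>)
  have dist: "\<forall>j l. 1 \<le> j \<and> l \<le> n i \<and> j + 2 \<le> l \<longrightarrow> y j \<noteq> y l"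
  proof (intro allI impI)
    fix j l assume jl: "1 \<le> j \<and> l \<le> n i \<and> j + 2 \<le> l"
    show "y j \<noteq> y l"
    proof
      assume eq: "y j = y l"
      have n4: "n i \<ge> 4" using jl False k by auto
      have Dj: "\<not> compat EG (y j) (y (Suc j))" using yD jl by auto
      have ySj: "y (Suc j) \<in> S (i, Suc j)" using yS jl by auto
      have ylS: "y l \<in> S (i, l)" using yS jl by auto
      have yjS: "y j \<in> S (i, j)" using yS jl by auto
      show False
      proof (cases "l \<ge> j + 3")
        case True
        have "compat EG (y (Suc j)) (y l)" by (rule far[OF ySj ylS]) (use jl True in auto)
        then show False using Dj eq compat_sym' by metis
      next
        case nl: False
        then have l2: "l = j + 2" using jl by simp
        show False
        proof (cases "l + 1 \<le> n i")
          case True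
          have Dl: "\<not> compat EG (y l) (y (Suc l))" using yD jl True by auto
          have "y (Suc l) \<in> S (i, Suc l)" using yS jl True by auto
          then have "compat EG (y j) (y (Suc l))" by (rule far[OF yjS]) (use jl True l2 in auto)
          then show False using Dl eq by simp
        next
          case False
          then have jj: "j \<ge> 2" using l2 jl n4 by auto
          have sj: "Suc (j - 1) = j" using jj by simp
          have "1 \<le> j - 1 \<and> j - 1 < n i" using jj jl by auto
          then have "\<not> compat EG (y (j - 1)) (y (Suc (j - 1)))" using yD by blast
          then have Dm: "\<not> compat EG (y (j - 1)) (y j)" unfolding sj .
          have "1 \<le> j - 1 \<and> j - 1 \<le> n i" using jj jl by auto
          then have "y (j - 1) \<in> S (i, j - 1)" using yS by blast
          then have "compat EG (y (j - 1)) (y l)" by (rule far[OF _ ylS]) (use jj jl l2 in auto)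
          then show False using Dm eq by simp
        qed
      qed
    qed
  qed
  have "pathprop i y" unfolding pathprop_def using yS yD dist by blast
  then show ?thesis by blast
qed

end


lemma int_rank:
  fixes v :: "'i \<Rightarrow> 'x \<Rightarrow> int"
  assumes "finite R" "finite I" "card R < card I" "\<forall>i\<in>I. \<forall>x. x \<notin> R \<longrightarrow> v i x = 0"
  shows "\<exists>c. (\<exists>i\<in>I. c i \<noteq> 0) \<and> (\<forall>x. (\<Sum>i\<in>I. c i * v i x) = 0)"
  using assms
proof (induction R arbitrary: I v rule: finite_induct)
  case empty
  then have "I \<noteq> {}" by auto
  then obtain i where "i \<in> I" by blast
  then show ?case using empty by (intro exI[of _ "\<lambda>_. 1"]) auto
next
  case (insert x R)
  show ?case
  proof (cases "\<forall>i\<in>I. v i x = 0")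
    case True
    have "card R < card I" using insert by simp
    moreover have "\<forall>i\<in>I. \<forall>y. y \<notin> R \<longrightarrow> v i y = 0"
    proof (intro ballI allI impI)
      fix i y assume iy: "i \<in> I" "y \<notin> R"
      show "v i y = 0"
      proof (cases "y = x")
        case True then show ?thesis using \<open>\<forall>i\<in>I. v i x = 0\<close> iy by simp
      next
        case False then show ?thesis using insert.prems(3) iy by simp
      qed
    qed
    ultimately show ?thesis using insert.IH[of I v] insert.prems by blast
  next
    case False
    then obtain i0 where i0: "i0 \<in> I" "v i0 x \<noteq> 0" by blast
    define I' where "I' = I - {i0}"
    define w where "w i y = v i0 x * v i y - v i x * v i0 y" for i y
    have cI': "card R < card I'"
      using insert.prems(1,2) insert.hyps i0(1) by (simp add: I'_def)
    have wR: "\<forall>i\<in>I'. \<forall>y. y \<notin> R \<longrightarrow> w i y = 0"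
    proof (intro ballI allI impI)
      fix i y assume i: "i \<in> I'" and y: "y \<notin> R"
      show "w i y = 0"
      proof (cases "y = x")
        case True then show ?thesis by (simp add: w_def)
      next
        case False
        then have "y \<notin> insert x R" using y by simp
        then have "v i y = 0" "v i0 y = 0" using insert.prems(3) i i0 by (auto simp: I'_def)
        then show ?thesis by (simp add: w_def)
      qed
    qed
    obtain c' where c': "\<exists>i\<in>I'. c' i \<noteq> 0" "\<forall>y. (\<Sum>i\<in>I'. c' i * w i y) = 0"
      using insert.IH[of I' w] cI' wR insert.prems(1) by (auto simp: I'_def)
    define c where "c i = (if i = i0 then - (\<Sum>j\<in>I'. c' j * v j x) else c' i * v i0 x)" for i
    have "\<exists>i\<in>I. c i \<noteq> 0"
    proof -
      obtain i where i: "i \<in> I'" "c' i \<noteq> 0" using c'(1) by blast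
      then have "c i = c' i * v i0 x" by (simp add: c_def I'_def)
      then have "c i \<noteq> 0" using i(2) i0(2) by simp
      then show ?thesis using i(1) by (auto simp: I'_def)
    qed
    moreover have "\<forall>y. (\<Sum>i\<in>I. c i * v i y) = 0"
    proof
      fix y
      have fI: "finite I'" using insert.prems(1) by (simp add: I'_def)
      have "I = insert i0 I'" "i0 \<notin> I'" using i0(1) by (auto simp: I'_def)
      then have "(\<Sum>i\<in>I. c i * v i y) = c i0 * v i0 y + (\<Sum>i\<in>I'. c i * v i y)"
        using fI by simp
      also have "(\<Sum>i\<in>I'. c i * v i y) = (\<Sum>i\<in>I'. c' i * v i0 x * v i y)"
        by (rule sum.cong) (auto simp: c_def I'_def)
      also have "c i0 = - (\<Sum>j\<in>I'. c' j * v j x)" by (simp add: c_def)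
      also have "- (\<Sum>j\<in>I'. c' j * v j x) * v i0 y + (\<Sum>i\<in>I'. c' i * v i0 x * v i y)
          = (\<Sum>i\<in>I'. c' i * w i y)"
      proof -
        have a: "(\<Sum>i\<in>I'. c' i * w i y) = (\<Sum>i\<in>I'. c' i * v i0 x * v i y) - (\<Sum>i\<in>I'. c' i * v i x * v i0 y)"
          unfolding sum_subtractf[symmetric] by (rule sum.cong) (auto simp: w_def algebra_simps)
        have b: "(\<Sum>i\<in>I'. c' i * v i x * v i0 y) = (\<Sum>j\<in>I'. c' j * v j x) * v i0 y"
          by (simp add: sum_distrib_right)
        show ?thesis using a b by simp
      qed
      also have "\<dots> = 0" using c'(2) by simp
      finally show "(\<Sum>i\<in>I. c i * v i y) = 0" .
    qed
    ultimately show ?thesis by blast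
  qed
qed



context setting
begin

definition Kset :: "nat set" where "Kset = {i. i < m \<and> n i = 1}"

lemma expw_concat_powl:
  assumes "distinct Ks"
  shows "expw (concat (map (\<lambda>i. powl (i, 1::nat) (c i)) Ks)) (i0, 1) = (if i0 \<in> set Ks then c i0 else 0)"
  using assms by (induction Ks) (auto simp: expw_powl)

lemma rank_bound:
  assumes "finite R" "(\<Union>i\<in>Kset. S (i, 1)) \<subseteq> R"
  shows "card Kset \<le> card R"
proof (rule ccontr)
  assume "\<not> card Kset \<le> card R"
  then have lt: "card R < card Kset" by simp
  have fK: "finite Kset" by (simp add: Kset_def)
  have sup: "\<forall>i\<in>Kset. \<forall>x. x \<notin> R \<longrightarrow> e (i, 1) x = 0"
    using assms(2) by (auto simp: S_def)
  obtain c where c: "\<exists>i\<in>Kset. c i \<noteq> 0" "\<forall>x. (\<Sum>i\<in>Kset. c i * e (i, 1) x) = 0"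
    using int_rank[OF assms(1) fK lt, of "\<lambda>i. e (i, 1)"] sup by blast
  obtain Ks where Ks: "distinct Ks" "set Ks = Kset" using finite_distinct_list[OF fK] by blast
  define w where "w = concat (map (\<lambda>i. powl (i, 1::nat) (c i)) Ks)"
  have vK: "(i, 1) \<in> VL" if "i \<in> Kset" for i using that by (auto simp: Kset_def join_pc_V_def)
  have lw: "letters w \<subseteq> VL"
  proof -
    have "letters w \<subseteq> (\<Union>i\<in>set Ks. letters (powl (i, 1::nat) (c i)))" by (auto simp: w_def letters_def)
    also have "\<dots> \<subseteq> VL"
    proof (rule UN_least)
      fix i assume "i \<in> set Ks"
      then have "(i, 1) \<in> VL" using vK Ks(2) by blast
      then show "letters (powl (i, 1::nat) (c i)) \<subseteq> VL" using letters_powl[of "(i, 1::nat)" "c i"] by blast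
    qed
    finally show ?thesis .
  qed
  define K' where "K' = (\<Union>i\<in>Kset. S (i, 1))"
  have clK: "clique EG K'"
    unfolding clique_def K'_def
  proof (intro ballI)
    fix x y assume "x \<in> (\<Union>i\<in>Kset. S (i, 1))" "y \<in> (\<Union>i\<in>Kset. S (i, 1))"
    then obtain i k where ik: "i \<in> Kset" "k \<in> Kset" "x \<in> S (i, 1)" "y \<in> S (k, 1)" by blast
    show "compat EG x y"
    proof (cases "i = k")
      case True then show ?thesis using S_clique[OF vK[OF ik(1)]] ik by (auto simp: clique_def)
    next
      case False
      then have "EL (i, 1) (k, 1)" using vK ik by (auto simp: join_pc_E_def)
      then show ?thesis using adj_compat vK ik by blast
    qed
  qed
  have fK': "finite K'" using fK S_fin by (simp add: K'_def)
  have hw: "hom_ext P w = concat (map (\<lambda>i. hom_ext P (powl (i, 1) (c i))) Ks)"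
    unfolding w_def by (induction Ks) auto
  have lhw: "letters (hom_ext P w) \<subseteq> K'"
  proof -
    have "letters (hom_ext P w) \<subseteq> (\<Union>v\<in>letters w. letters (P v))" by (rule letters_hom_ext)
    also have "\<dots> \<subseteq> K'"
    proof (rule UN_least)
      fix v assume "v \<in> letters w"
      then have "v \<in> (\<Union>i\<in>set Ks. letters (powl (i, 1::nat) (c i)))" by (auto simp: w_def letters_def)
      then obtain i where i: "i \<in> set Ks" "v \<in> letters (powl (i, 1::nat) (c i))" by blast
      then have "v = (i, 1)" using letters_powl[of "(i, 1::nat)" "c i"] by blast
      then have "i \<in> Kset" "v = (i, 1)" using i(1) Ks(2) by auto
      then show "letters (P v) \<subseteq> K'" using letters_P by (auto simp: K'_def)
    qed
    finally show ?thesis .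
  qed
  have "expw (hom_ext P w) x = 0" for x
  proof -
    have "expw (hom_ext P w) x = (\<Sum>i\<leftarrow>Ks. c i * e (i, 1) x)"
      unfolding hw by (induction Ks) (auto simp: expw_hom_ext_powl expw_P)
    also have "\<dots> = (\<Sum>i\<in>Kset. c i * e (i, 1) x)" using Ks by (simp add: sum_list_distinct_conv_sum_set)
    finally show ?thesis using c(2) by simp
  qed
  then have "raag_eq EG (hom_ext P w) []" by (rule clique_eq_Nil[OF clK fK' lhw])
  then have "raag_eq EG (hom_ext P w) (hom_ext P [])" by simp
  then have "raag_eq EL w []" using inj_P[OF lw] by simp
  then have ew: "expw w = expw ([] :: (nat \<times> nat) word)" by (rule raag_eq_expw)
  obtain i0 where i0: "i0 \<in> Kset" "c i0 \<noteq> 0" using c(1) by blast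
  have "expw w (i0, 1) = c i0" unfolding w_def using expw_concat_powl[OF Ks(1), of c i0] Ks(2) i0(1) by simp
  moreover have "expw w (i0, 1) = 0" using ew by simp
  ultimately show False using i0(2) by simp
qed

end


context setting
begin

definition Uf :: "nat \<Rightarrow> 'b set" where "Uf i = (\<Union>j\<in>{1..n i}. S (i, j))"
definition UU :: "'b set" where "UU = (\<Union>v\<in>VL. S v)"
definition Zc :: "'b set" where "Zc = {z \<in> UU. \<forall>y\<in>UU. compat EG z y}"
definition Rset :: "'b set" where "Rset = Zc \<union> (\<Union>i\<in>Kset. Uf i)"

lemma hom_supp_UU: "hom_supp VL EG \<psi> = UU"
  unfolding hom_supp_def UU_def by (rule SUP_cong[OF refl]) (rule supp_eq)

lemma S_Uf: "1 \<le> j \<Longrightarrow> j \<le> n i \<Longrightarrow> S (i, j) \<subseteq> Uf i"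
  by (auto simp: Uf_def)

lemma Uf_UU: "i < m \<Longrightarrow> Uf i \<subseteq> UU"
  by (auto simp: Uf_def UU_def join_pc_V_def)

lemma UU_VG: "UU \<subseteq> VG" using S_VG by (auto simp: UU_def)

lemma UU_fin: "finite UU" using finite_subset[OF UU_VG VG_fin] .

lemma cross:
  assumes "i < m" "k < m" "i \<noteq> k" "x \<in> Uf i" "y \<in> Uf k"
  shows "compat EG x y"
proof -
  obtain j l where jl: "1 \<le> j" "j \<le> n i" "x \<in> S (i, j)" "1 \<le> l" "l \<le> n k" "y \<in> S (k, l)"
    using assms(4,5) by (auto simp: Uf_def)
  have v: "(i, j) \<in> VL" "(k, l) \<in> VL" using assms jl by (auto simp: join_pc_V_def)
  have "EL (i, j) (k, l)" using v assms(3) by (auto simp: join_pc_E_def)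
  then show ?thesis using adj_compat[OF v] jl by blast
qed

lemma inter_Zc:
  assumes "i < m" "k < m" "i \<noteq> k" "x \<in> Uf i" "x \<in> Uf k"
  shows "x \<in> Zc"
proof -
  have "x \<in> UU" using assms Uf_UU by blast
  moreover have "compat EG x y" if y: "y \<in> UU" for y
  proof -
    obtain l j where lj: "(l, j) \<in> VL" "y \<in> S (l, j)" using y by (auto simp: UU_def)
    then have l: "l < m" "y \<in> Uf l" using S_Uf by (auto simp: join_pc_V_def)
    show ?thesis
    proof (cases "l = i")
      case True
      then show ?thesis using cross[OF assms(2) l(1) _ assms(5) l(2)] assms(3) by blast
    next
      case False
      then show ?thesis using cross[OF assms(1) l(1) _ assms(4) l(2)] by blast
    qed
  qed
  ultimately show ?thesis by (simp add: Zc_def)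
qed

lemma path_notZ:
  assumes i: "i < m" "n i \<ge> 2" and p: "pathprop i y" and j: "1 \<le> j" "j \<le> n i"
  shows "y j \<notin> Zc"
proof
  assume z: "y j \<in> Zc"
  have yS: "\<And>j. 1 \<le> j \<Longrightarrow> j \<le> n i \<Longrightarrow> y j \<in> S (i, j)" using p by (auto simp: pathprop_def)
  have yD: "\<And>j. 1 \<le> j \<Longrightarrow> j < n i \<Longrightarrow> \<not> compat EG (y j) (y (Suc j))" using p by (auto simp: pathprop_def)
  show False
  proof (cases "j < n i")
    case True
    have "y (Suc j) \<in> S (i, Suc j)" using yS[of "Suc j"] True by simp
    moreover have "S (i, Suc j) \<subseteq> Uf i" by (rule S_Uf) (use True in auto)
    ultimately have "y (Suc j) \<in> UU" using Uf_UU[OF i(1)] by blast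
    then have "compat EG (y j) (y (Suc j))" using z by (simp add: Zc_def)
    then show False using yD j True by blast
  next
    case False
    then have jn: "j = n i" using j by simp
    have sj: "Suc (j - 1) = j" using jn i by simp
    have j1: "1 \<le> j - 1" "j - 1 < n i" using jn i by auto
    have "\<not> compat EG (y (j - 1)) (y (Suc (j - 1)))" using yD[OF j1] .
    then have nc: "\<not> compat EG (y (j - 1)) (y j)" unfolding sj .
    have "y (j - 1) \<in> S (i, j - 1)" using yS[of "j - 1"] j1 by simp
    moreover have "S (i, j - 1) \<subseteq> Uf i" by (rule S_Uf) (use j1 in auto)
    ultimately have "y (j - 1) \<in> UU" using Uf_UU[OF i(1)] by blast
    then have "compat EG (y j) (y (j - 1))" using z by (simp add: Zc_def)
    then show False using nc compat_sym' by blast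
  qed
qed

definition yp :: "nat \<Rightarrow> nat \<Rightarrow> 'b" where "yp i = (SOME y. pathprop i y)"

lemma yp: "i < m \<Longrightarrow> n i \<ge> 2 \<Longrightarrow> pathprop i (yp i)"
proof -
  assume a: "i < m" "n i \<ge> 2"
  obtain y where "pathprop i y" using path_exists[OF a] by blast
  then show ?thesis unfolding yp_def using someI[of "pathprop i" y] by simp
qed

lemma Rset_fin: "finite Rset"
proof -
  have "Rset \<subseteq> UU" using Uf_UU by (auto simp: Rset_def Zc_def Kset_def)
  then show ?thesis using finite_subset UU_fin by blast
qed

lemma Kset_Uf: "i \<in> Kset \<Longrightarrow> Uf i = S (i, 1)"
  by (auto simp: Kset_def Uf_def)

lemma rho_exists: "\<exists>\<rho>. \<rho> ` Kset \<subseteq> Rset \<and> inj_on \<rho> Kset"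
proof (rule card_le_inj)
  show "finite Kset" by (simp add: Kset_def)
  show "finite Rset" by (rule Rset_fin)
  show "card Kset \<le> card Rset"
    by (rule rank_bound[OF Rset_fin]) (auto simp: Rset_def Kset_Uf)
qed

lemma Rset_compat:
  assumes "r \<in> Rset" "r' \<in> Rset"
  shows "compat EG r r'"
proof -
  have RU: "Rset \<subseteq> UU" using Uf_UU by (auto simp: Rset_def Zc_def Kset_def)
  show ?thesis
  proof (cases "r \<in> Zc")
    case True
    have "r' \<in> UU" using assms(2) RU by blast
    then show ?thesis using True by (simp add: Zc_def)
  next
    case False
    show ?thesis
    proof (cases "r' \<in> Zc")
      case True
      have "r \<in> UU" using assms(1) RU by blast
      then have "compat EG r' r" using True by (simp add: Zc_def)
      then show ?thesis by (rule compat_sym')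
    next
      case False
      obtain i k where ik: "i \<in> Kset" "k \<in> Kset" "r \<in> Uf i" "r' \<in> Uf k"
        using assms \<open>r \<notin> Zc\<close> False by (auto simp: Rset_def)
      show ?thesis
      proof (cases "i = k")
        case True
        have "(i, 1) \<in> VL" using ik(1) by (auto simp: Kset_def join_pc_V_def)
        then have "clique EG (S (i, 1))" by (rule S_clique)
        moreover have "r \<in> S (i, 1)" "r' \<in> S (i, 1)" using ik True Kset_Uf by auto
        ultimately show ?thesis by (simp add: clique_def)
      next
        case False
        have "i < m" "k < m" using ik by (auto simp: Kset_def)
        then show ?thesis using cross[of i k r r'] ik False by blast
      qed
    qed
  qed
qed

lemma Rset_path:
  assumes r: "r \<in> Rset" and k: "k < m" "n k \<ge> 2" and p: "p \<in> Uf k" "p \<notin> Zc"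
  shows "compat EG r p \<and> r \<noteq> p"
proof (cases "r \<in> Zc")
  case True
  have "p \<in> UU" using p Uf_UU k by blast
  then show ?thesis using True p(2) by (auto simp: Zc_def)
next
  case False
  then obtain i where i: "i \<in> Kset" "r \<in> Uf i" using r by (auto simp: Rset_def)
  then have ik: "i \<noteq> k" "i < m" using k by (auto simp: Kset_def)
  have "compat EG r p" using cross[OF ik(2) k(1) ik(1) i(2) p(1)] .
  moreover have "r \<noteq> p" using inter_Zc[OF ik(2) k(1) ik(1) i(2)] p by blast
  ultimately show ?thesis by simp
qed


end


context setting
begin

lemma yp_props:
  assumes "i < m" "n i \<ge> 2" "1 \<le> j" "j \<le> n i"
  shows "yp i j \<in> S (i, j) \<and> yp i j \<in> Uf i \<and> yp i j \<notin> Zc"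
proof -
  have P: "pathprop i (yp i)" by (rule yp[OF assms(1,2)])
  then have a: "yp i j \<in> S (i, j)" using assms(3,4) unfolding pathprop_def by blast
  moreover have "S (i, j) \<subseteq> Uf i" by (rule S_Uf[OF assms(3,4)])
  moreover have "yp i j \<notin> Zc" by (rule path_notZ[OF assms(1,2) P assms(3,4)])
  ultimately show ?thesis by blast
qed

lemma main:
  "\<exists>\<iota>. full_embedding VL EL VG EG \<iota> \<and> \<iota> ` VL \<subseteq> hom_supp VL EG \<psi>"
proof -
  obtain \<rho> where \<rho>: "\<rho> ` Kset \<subseteq> Rset" "inj_on \<rho> Kset" using rho_exists by blast
  define \<iota> where "\<iota> p = (if n (fst p) = 1 then \<rho> (fst p) else yp (fst p) (snd p))" for p
  have vl: "\<And>i j. (i, j) \<in> VL \<longleftrightarrow> i < m \<and> 1 \<le> j \<and> j \<le> n i" by (simp add: join_pc_V_def)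
  have img: "\<iota> p \<in> UU" if p: "p \<in> VL" for p
  proof -
    obtain i j where ij: "p = (i, j)" by (cases p)
    have i: "i < m" "1 \<le> j" "j \<le> n i" using p ij vl by auto
    show ?thesis
    proof (cases "n i = 1")
      case True
      then have "i \<in> Kset" using i by (simp add: Kset_def)
      then have "\<rho> i \<in> Rset" using \<rho> by blast
      moreover have "Rset \<subseteq> UU" using Uf_UU by (auto simp: Rset_def Zc_def Kset_def)
      ultimately show ?thesis using True by (auto simp: \<iota>_def ij)
    next
      case False
      then have "n i \<ge> 2" using i by simp
      then have "yp i j \<in> Uf i" using yp_props[OF i(1) _ i(2,3)] by blast
      then have "yp i j \<in> UU" using Uf_UU[OF i(1)] by blast
      then show ?thesis using False by (simp add: \<iota>_def ij)
    qed
  qed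
  have pair: "\<iota> p \<noteq> \<iota> q \<and> (EG (\<iota> p) (\<iota> q) \<longleftrightarrow> EL p q)" if pq: "p \<in> VL" "q \<in> VL" "p \<noteq> q" for p q
  proof -
    obtain i j where ij: "p = (i, j)" by (cases p)
    obtain k l where kl: "q = (k, l)" by (cases q)
    have i: "i < m" "1 \<le> j" "j \<le> n i" using pq ij vl by auto
    have k: "k < m" "1 \<le> l" "l \<le> n k" using pq kl vl by auto
    have fin: "\<iota> p \<noteq> \<iota> q \<and> compat EG (\<iota> p) (\<iota> q) \<Longrightarrow> EL p q \<Longrightarrow> ?thesis"
      by (auto simp: compat_def)
    show ?thesis
    proof (cases "i = k")
      case False
      have ELt: "EL p q" using pq False by (auto simp: join_pc_E_def ij kl)
      have "\<iota> p \<noteq> \<iota> q \<and> compat EG (\<iota> p) (\<iota> q)"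
      proof (cases "n i = 1")
        case ni: True
        then have iK: "i \<in> Kset" using i by (simp add: Kset_def)
        show ?thesis
        proof (cases "n k = 1")
          case True
          then have kK: "k \<in> Kset" using k by (simp add: Kset_def)
          have "\<rho> i \<noteq> \<rho> k" using \<rho>(2) iK kK False by (auto dest: inj_onD)
          moreover have "compat EG (\<rho> i) (\<rho> k)" using Rset_compat \<rho>(1) iK kK by blast
          ultimately show ?thesis using ni True by (simp add: \<iota>_def ij kl)
        next
          case nk: False
          then have n2: "n k \<ge> 2" using k by simp
          have pth: "yp k l \<in> Uf k" "yp k l \<notin> Zc" using yp_props[OF k(1) n2 k(2,3)] by blast+
          have "compat EG (\<rho> i) (yp k l) \<and> \<rho> i \<noteq> yp k l"
            by (rule Rset_path[OF _ k(1) n2 pth]) (use \<rho>(1) iK in blast)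
          then show ?thesis using ni nk by (simp add: \<iota>_def ij kl)
        qed
      next
        case ni: False
        then have n2i: "n i \<ge> 2" using i by simp
        have pthi: "yp i j \<in> Uf i" "yp i j \<notin> Zc" using yp_props[OF i(1) n2i i(2,3)] by blast+
        show ?thesis
        proof (cases "n k = 1")
          case True
          then have kK: "k \<in> Kset" using k by (simp add: Kset_def)
          have "compat EG (\<rho> k) (yp i j) \<and> \<rho> k \<noteq> yp i j"
            by (rule Rset_path[OF _ i(1) n2i pthi]) (use \<rho>(1) kK in blast)
          then show ?thesis using ni True compat_sym' by (auto simp: \<iota>_def ij kl)
        next
          case nk: False
          then have n2: "n k \<ge> 2" using k by simp
          have pth: "yp k l \<in> Uf k" "yp k l \<notin> Zc" using yp_props[OF k(1) n2 k(2,3)] by blast+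
          have "compat EG (yp i j) (yp k l)" using cross[OF i(1) k(1) False pthi(1) pth(1)] .
          moreover have "yp i j \<noteq> yp k l"
          proof
            assume eq: "yp i j = yp k l"
            then have "yp i j \<in> Uf k" using pth(1) by simp
            then have "yp i j \<in> Zc" using inter_Zc[OF i(1) k(1) False pthi(1)] by blast
            then show False using pthi(2) by blast
          qed
          ultimately show ?thesis using ni nk by (simp add: \<iota>_def ij kl)
        qed
      qed
      then show ?thesis using fin ELt by blast
    next
      case True
      then have jl: "j \<noteq> l" using pq ij kl by simp
      then have n2: "n i \<ge> 2" using i k True by auto
      have P: "pathprop i (yp i)" by (rule yp[OF i(1) n2])
      have yS: "\<And>j. 1 \<le> j \<Longrightarrow> j \<le> n i \<Longrightarrow> yp i j \<in> S (i, j)" using P by (auto simp: pathprop_def)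
      have yD: "\<And>j. 1 \<le> j \<Longrightarrow> j < n i \<Longrightarrow> \<not> compat EG (yp i j) (yp i (Suc j))" using P by (auto simp: pathprop_def)
      have yN: "\<And>j l. 1 \<le> j \<Longrightarrow> l \<le> n i \<Longrightarrow> j + 2 \<le> l \<Longrightarrow> yp i j \<noteq> yp i l" using P by (auto simp: pathprop_def)
      have iota: "\<iota> p = yp i j" "\<iota> q = yp i l" using n2 True by (auto simp: \<iota>_def ij kl)
      have farc: "compat EG (yp i a) (yp i b) \<and> EL (i, a) (i, b)" if "1 \<le> a" "b \<le> n i" "a + 2 \<le> b" for a b
      proof -
        have E: "EL (i, a) (i, b)" by (rule EL_far) (use that i in auto)
        have "compat EG (yp i a) (yp i b)"
          by (rule adj_compat[OF _ _ E]) (use that i yS in \<open>auto simp: join_pc_V_def\<close>)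
        then show ?thesis using E by simp
      qed
      consider "l = Suc j" | "j = Suc l" | "j + 2 \<le> l" | "l + 2 \<le> j" using jl by linarith
      then show ?thesis
      proof cases
        case 1
        have "\<not> compat EG (yp i j) (yp i l)" using yD[of j] 1 i k True by auto
        moreover have "\<not> EL p q" using 1 by (auto simp: join_pc_E_def ij kl True)
        ultimately show ?thesis using iota by (auto simp: compat_def)
      next
        case 2
        have "\<not> compat EG (yp i l) (yp i j)" using yD[of l] 2 i k True by auto
        then have "\<not> compat EG (yp i j) (yp i l)" using compat_sym' by blast
        moreover have "\<not> EL p q" using 2 by (auto simp: join_pc_E_def ij kl True)
        ultimately show ?thesis using iota by (auto simp: compat_def)
      next
        case 3
        have "yp i j \<noteq> yp i l" using yN[of j l] 3 i k True by auto
        moreover have "compat EG (yp i j) (yp i l) \<and> EL (i, j) (i, l)" using farc[of j l] 3 i k True by auto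
        ultimately show ?thesis using iota ij kl True by (auto simp: compat_def)
      next
        case 4
        have "yp i l \<noteq> yp i j" using yN[of l j] 4 i k True by auto
        moreover have "compat EG (yp i l) (yp i j) \<and> EL (i, l) (i, j)" using farc[of l j] 4 i k True by auto
        moreover have "EL (i, j) (i, l)" using calculation(2) by (auto simp: join_pc_E_def)
        ultimately show ?thesis using iota ij kl True EG_sym by (auto simp: compat_def)
      qed
    qed
  qed
  have "full_embedding VL EL VG EG \<iota>"
    unfolding full_embedding_def
  proof (intro conjI ballI)
    show "inj_on \<iota> VL" using pair by (auto simp: inj_on_def)
    show "\<iota> ` VL \<subseteq> VG" using img UU_VG by blast
    fix u v assume u: "u \<in> VL" and v: "v \<in> VL"
    show "EG (\<iota> u) (\<iota> v) = EL u v"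
    proof (cases "u = v")
      case True then show ?thesis using EG_irrefl by (auto simp: join_pc_E_def)
    next
      case False then show ?thesis using pair u v by blast
    qed
  qed
  moreover have "\<iota> ` VL \<subseteq> hom_supp VL EG \<psi>" using img hom_supp_UU by blast
  ultimately show ?thesis by blast
qed

end

theorem lemma4p4:
  fixes m :: nat and n :: "nat \<Rightarrow> nat"
    and VG :: "'b set" and EG :: "'b \<Rightarrow> 'b \<Rightarrow> bool"
    and \<psi> :: "nat \<times> nat \<Rightarrow> 'b word"
  assumes "\<forall>i<m. n i \<ge> 1"
    and "finite_simple_graph VG EG"
    and "raag_hom (join_pc_V m n) (join_pc_E m n) VG EG \<psi>"
    and "raag_hom_injective (join_pc_V m n) (join_pc_E m n) EG \<psi>"
    and "KK_condition (join_pc_V m n) EG \<psi>"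
  shows "\<exists>\<iota>. full_embedding (join_pc_V m n) (join_pc_E m n) VG EG \<iota>
           \<and> \<iota> ` join_pc_V m n \<subseteq> hom_supp (join_pc_V m n) EG \<psi>"
proof -
  interpret setting m n VG EG \<psi> by (unfold_locales) (use assms in auto)
  show ?thesis by (rule main)
qed


end
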